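(* For the RHA process and all $n\ge0$, $j\ge1$, $$H(X^n_j\mid\mathcal G_{\le n})=\log k_n\quad\text{and}\quad I(X^n_j;X^n_{j+1}\mid\mathcal G_{\le n})=0.$$
   Context: Random hierarchical association (RHA) process. Fix positive integers $(k_n)_{n\ge0}$ (perplexities) with $k_{n-1}\le k_n\le k_{n-1}^2$ for all $n\ge1$. On a probability space $(\Omega,\mathcal J,P)$ let, for each $n\ge1$, $(L_{nj},R_{nj})_{j=1}^{k_n}$ be the lexicographically sorted enumeration of a uniformly random $k_n$-element subset of $\{1,\dots,k_{n-1}\}^2$ (each of the $\binom{k_{n-1}^2}{k_n}$ subsets equally likely), independently over $n$. Let $(C_n)_{n\ge0}$ be independent, independent of all $(L_{nj},R_{nj})$, with $C_n$ uniform on $\{1,\dots,k_n\}$. Define strings $Y^0_j=j$ (length 1) for $1\le j\le k_0$ and $Y^n_j=Y^{n-1}_{L_{nj}}Y^{n-1}_{R_{nj}}$ (concatenation). The RHA process is $\mathcal X=Y^0_{C_0}Y^1_{C_1}Y^2_{C_2}\cdots=X_1X_2X_3\cdots$, $X_{k:l}=X_k\cdots X_l$; for $n\ge0$, $j\ge1$, $X^n_j=X_{j2^n:(j+1)2^n-1}$. $\mathcal G_{\le n}=(L_{lj},R_{lj})_{1\le l\le n,\,1\le j\le k_l}$ ($\mathcal G_{\le0}$ trivial). Logarithms are natural; $H(X|Y)=\mathbb E_P[-\log P(X|Y)]$ and $I(X;Y|Z)=H(X|Z)-H(X|Y,Z)$. *)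

theory Defs
  imports "HOL-Probability.Probability"
begin

text \<open>The level-n random subset (for n \<ge> 1) is S n, a subset of pairs; its
  lexicographically sorted enumeration is lex_enum (S n), whose
  (j-1)-th entry (0-based) is the pair (L_nj, R_nj).\<close>

definition lex_less :: "nat \<times> nat \<Rightarrow> nat \<times> nat \<Rightarrow> bool" where
  "lex_less p q \<longleftrightarrow> fst p < fst q \<or> (fst p = fst q \<and> snd p < snd q)"

definition lex_enum :: "(nat \<times> nat) set \<Rightarrow> (nat \<times> nat) list" where
  "lex_enum A = (THE xs. sorted_wrt lex_less xs \<and> set xs = A)"

definition rha_subsets :: "nat \<Rightarrow> nat \<Rightarrow> (nat \<times> nat) set set" where
  "rha_subsets kprev kn = {A. A \<subseteq> {1..kprev} \<times> {1..kprev} \<and> card A = kn}"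

definition rha_vars ::
  "(nat \<Rightarrow> 'a \<Rightarrow> (nat \<times> nat) set) \<Rightarrow> (nat \<Rightarrow> 'a \<Rightarrow> nat) \<Rightarrow> nat + nat \<Rightarrow> 'a \<Rightarrow> (nat \<times> nat) set + nat"
where
  "rha_vars S C i \<omega> = (case i of Inl n \<Rightarrow> Inl (S n \<omega>) | Inr n \<Rightarrow> Inr (C n \<omega>))"

fun rha_Y :: "(nat \<Rightarrow> (nat \<times> nat) set) \<Rightarrow> nat \<Rightarrow> nat \<Rightarrow> nat list" where
  "rha_Y G 0 j = [j]"
| "rha_Y G (Suc n) j =
     (case lex_enum (G (Suc n)) ! (j - 1) of
        (l, r) \<Rightarrow> rha_Y G n l @ rha_Y G n r)"

text \<open>X_i (i \<ge> 1) is the i-th symbol of Y^0_{C_0} Y^1_{C_1} Y^2_{C_2} ...;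
  the first i blocks already contain at least i symbols.\<close>
definition rha_X :: "(nat \<Rightarrow> 'a \<Rightarrow> (nat \<times> nat) set) \<Rightarrow> (nat \<Rightarrow> 'a \<Rightarrow> nat) \<Rightarrow> 'a \<Rightarrow> nat \<Rightarrow> nat" where
  "rha_X S C \<omega> i = concat (map (\<lambda>m. rha_Y (\<lambda>l. S l \<omega>) m (C m \<omega>)) [0..<i]) ! (i - 1)"

definition rha_block :: "(nat \<Rightarrow> 'a \<Rightarrow> (nat \<times> nat) set) \<Rightarrow> (nat \<Rightarrow> 'a \<Rightarrow> nat) \<Rightarrow> nat \<Rightarrow> nat \<Rightarrow> 'a \<Rightarrow> nat list" where
  "rha_block S C n j \<omega> = map (rha_X S C \<omega>) [j * 2 ^ n..<(j + 1) * 2 ^ n]"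

definition rha_G :: "(nat \<Rightarrow> 'a \<Rightarrow> (nat \<times> nat) set) \<Rightarrow> nat \<Rightarrow> 'a \<Rightarrow> (nat \<times> nat) list list" where
  "rha_G S n \<omega> = map (\<lambda>l. lex_enum (S l \<omega>)) [1..<n + 1]"

end

theory Submission
  imports Defs
begin

lemma sorted_wrt_unique:
  assumes irr: "\<And>x. \<not> R x x" and asy: "\<And>x y. R x y \<Longrightarrow> \<not> R y x"
  shows "sorted_wrt R xs \<Longrightarrow> sorted_wrt R ys \<Longrightarrow> set xs = set ys \<Longrightarrow> xs = ys"
proof (induction xs arbitrary: ys)
  case Nil then show ?case by simp
next
  case (Cons x xs)
  then obtain y ys' where ys: "ys = y # ys'" by (cases ys) auto
  have xy: "x = y"
  proof (rule ccontr)
    assume "x \<noteq> y"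
    then have "y \<in> set xs" "x \<in> set ys'" using Cons.prems ys by auto
    then have "R x y" "R y x" using Cons.prems ys by auto
    then show False using asy by blast
  qed
  have "x \<notin> set xs" using Cons.prems irr by auto
  moreover have "x \<notin> set ys'" using Cons.prems irr ys xy by auto
  ultimately have "set xs = set ys'" using Cons.prems ys xy by auto
  then show ?case using Cons ys xy by auto
qed

lemma lex_less_irr: "\<not> lex_less x x" and lex_less_asym: "lex_less x y \<Longrightarrow> \<not> lex_less y x"
  by (auto simp: lex_less_def)

lemma lex_enum_exists: "finite A \<Longrightarrow> \<exists>xs. sorted_wrt lex_less xs \<and> set xs = A"
proof (induction "card A" arbitrary: A)
  case 0 then show ?case by auto
next
  case (Suc k)
  then have ne: "A \<noteq> {}" by auto
  define a0 where "a0 = Min (fst ` A)"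
  have a0: "a0 \<in> fst ` A" using Suc.prems ne unfolding a0_def by (intro Min_in) auto
  define b0 where "b0 = Min {b. (a0, b) \<in> A}"
  have fin: "finite {b. (a0, b) \<in> A}"
    using Suc.prems by (rule finite_subset[rotated, OF finite_imageI[of _ snd]]) force
  have "{b. (a0, b) \<in> A} \<noteq> {}" using a0 by force
  then have m: "(a0, b0) \<in> A" unfolding b0_def using Min_in[OF fin] by auto
  have least: "lex_less (a0, b0) y" if "y \<in> A" "y \<noteq> (a0, b0)" for y
  proof -
    have "a0 \<le> fst y" unfolding a0_def using Suc.prems that by auto
    moreover have "fst y = a0 \<Longrightarrow> b0 \<le> snd y" unfolding b0_def
      apply (rule Min_le[OF fin]) using that by (metis mem_Collect_eq prod.collapse)
    ultimately show ?thesis using that by (cases y) (auto simp: lex_less_def)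
  qed
  have "k = card (A - {(a0, b0)})" using Suc.hyps m Suc.prems by simp
  then obtain xs where xs: "sorted_wrt lex_less xs" "set xs = A - {(a0, b0)}"
    using Suc.hyps Suc.prems by blast
  show ?case using xs m least by (intro exI[of _ "(a0, b0) # xs"]) auto
qed

lemma lex_enum:
  assumes "finite A"
  shows "sorted_wrt lex_less (lex_enum A)" "set (lex_enum A) = A"
proof -
  obtain xs where xs: "sorted_wrt lex_less xs" "set xs = A" using lex_enum_exists[OF assms] by blast
  have "lex_enum A = xs" unfolding lex_enum_def
    by (rule the_equality) (use xs in \<open>auto intro: sorted_wrt_unique[OF lex_less_irr lex_less_asym]\<close>)
  then show "sorted_wrt lex_less (lex_enum A)" "set (lex_enum A) = A" using xs by auto
qed

lemma lex_enum_distinct: "finite A \<Longrightarrow> distinct (lex_enum A)"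
proof -
  have "sorted_wrt lex_less xs \<Longrightarrow> distinct xs" for xs
    by (induction xs) (auto simp: lex_less_irr)
  then show "finite A \<Longrightarrow> distinct (lex_enum A)" using lex_enum by blast
qed

lemma lex_enum_length: "finite A \<Longrightarrow> length (lex_enum A) = card A"
  using lex_enum_distinct lex_enum(2) distinct_card by metis

fun rY :: "(nat \<times> nat) list list \<Rightarrow> nat \<Rightarrow> nat \<Rightarrow> nat list" where
  "rY es 0 c = [c]"
| "rY es (Suc m) c = (case es ! m ! (c - 1) of (l, r) \<Rightarrow> rY es m l @ rY es m r)"

lemma length_rY[simp]: "length (rY es m c) = 2 ^ m"
  by (induction m arbitrary: c) (auto split: prod.split)

lemma rY_cong: "(\<And>i. i < m \<Longrightarrow> es ! i = es' ! i) \<Longrightarrow> rY es m c = rY es' m c"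
  by (induction m arbitrary: c) (auto split: prod.split)

lemma rha_Y_eq: "m \<le> N \<Longrightarrow> rha_Y G m c = rY (map (\<lambda>l. lex_enum (G l)) [1..<N+1]) m c"
proof (induction m arbitrary: c)
  case 0 then show ?case by simp
next
  case (Suc m)
  have "map (\<lambda>l. lex_enum (G l)) [1..<N+1] ! m = lex_enum (G (Suc m))"
    using Suc.prems by (simp del: upt_Suc)
  then show ?case using Suc by (auto split: prod.split)
qed

fun dsc :: "(nat \<times> nat) list list \<Rightarrow> nat \<Rightarrow> nat \<Rightarrow> nat \<Rightarrow> nat" where
  "dsc s 0 t c = c"
| "dsc s (Suc d) t c = dsc s d (t mod 2 ^ d) ((if 2 ^ d \<le> t then snd else fst) (s ! d ! (c - 1)))"

lemma dsc_cong: "(\<And>i. i < d \<Longrightarrow> s ! i = s' ! i) \<Longrightarrow> dsc s d t c = dsc s' d t c"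
  by (induction d arbitrary: t c) auto

lemma take_drop_append1:
  "a + L \<le> length xs \<Longrightarrow> take L (drop a (xs @ ys)) = take L (drop a xs)"
  by simp

lemma rY_dsc:
  assumes "t < 2 ^ d" "n + d \<le> length es"
  shows "take (2 ^ n) (drop (t * 2 ^ n) (rY es (n + d) c)) = rY es n (dsc (drop n es) d t c)"
  using assms
proof (induction d arbitrary: t c)
  case 0 then show ?case by simp
next
  case (Suc d)
  obtain l r where lr: "es ! (n + d) ! (c - 1) = (l, r)" by (cases "es ! (n + d) ! (c - 1)")
  have dr: "drop n es ! d = es ! (n + d)" using Suc.prems by simp
  have e: "rY es (n + Suc d) c = rY es (n + d) l @ rY es (n + d) r"
    using lr by (simp split: prod.split)
  show ?case
  proof (cases "2 ^ d \<le> t")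
    case True
    have t': "t - 2 ^ d < 2 ^ d" using Suc.prems by simp
    have "t * 2 ^ n = 2 ^ (n + d) + (t - 2 ^ d) * 2 ^ n"
      using True by (simp add: algebra_simps power_add diff_mult_distrib)
    then have "drop (t * 2 ^ n) (rY es (n + Suc d) c) = drop ((t - 2 ^ d) * 2 ^ n) (rY es (n + d) r)"
      unfolding e by simp
    moreover have "t mod 2 ^ d = t - 2 ^ d" using True t'
      by (metis le_add_diff_inverse mod_add_self1 mod_less)
    ultimately show ?thesis using Suc.IH[OF t'] Suc.prems True dr lr by simp
  next
    case False
    have t': "t < 2 ^ d" using False by simp
    have le: "t * 2 ^ n + 2 ^ n \<le> length (rY es (n + d) l)"
    proof -
      have "(t + 1) * 2 ^ n \<le> 2 ^ d * 2 ^ n" using t' by (intro mult_le_mono1) simp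
      then show ?thesis by (simp add: power_add algebra_simps)
    qed
    have "take (2 ^ n) (drop (t * 2 ^ n) (rY es (n + Suc d) c)) = take (2 ^ n) (drop (t * 2 ^ n) (rY es (n + d) l))"
      unfolding e by (rule take_drop_append1[OF le])
    then show ?thesis using Suc.IH[OF t'] Suc.prems False dr lr by simp
  qed
qed

lemma length_concat_pow2:
  assumes "\<And>l. length (f l) = 2 ^ l"
  shows "length (concat (map f [0..<m])) = 2 ^ m - 1"
proof (induction m)
  case 0 then show ?case by simp
next
  case (Suc m)
  have "(1::nat) \<le> 2 ^ m" by simp
  then show ?case using Suc assms by simp
qed

lemma concat_pos:
  assumes len: "\<And>l. length (f l) = 2 ^ l" and i: "2 ^ m \<le> i" "i < 2 ^ Suc m"
  shows "concat (map f [0..<i]) ! (i - 1) = f m ! (i - 2 ^ m)"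
proof -
  have "m < 2 ^ m" by (rule less_exp)
  then have mi: "m < i" using i(1) by linarith
  have "[0..<i] = [0..<m] @ [m..<i]"
    using upt_add_eq_append[of 0 m "i - m"] mi by simp
  also have "[m..<i] = m # [Suc m..<i]" using mi by (simp add: upt_conv_Cons)
  finally have "[0..<i] = [0..<m] @ m # [Suc m..<i]" .
  then have eq: "concat (map f [0..<i]) = concat (map f [0..<m]) @ f m @ concat (map f [Suc m..<i])"
    by simp
  have l: "length (concat (map f [0..<m])) = 2 ^ m - 1" by (rule length_concat_pow2[OF len])
  have p1: "\<not> i - 1 < 2 ^ m - 1" using i by simp
  have o: "(1::nat) \<le> 2 ^ m" by simp
  have p2: "i - 1 - (2 ^ m - 1) = i - 2 ^ m" using i o by arith
  have p3: "i - 2 ^ m < length (f m)" using i len by simp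
  show ?thesis unfolding eq using l p1 p2 p3 by (simp add: nth_append)
qed

lemma rha_X_eq:
  assumes "2 ^ m \<le> i" "i < 2 ^ Suc m"
  shows "rha_X S C \<omega> i = rha_Y (\<lambda>l. S l \<omega>) m (C m \<omega>) ! (i - 2 ^ m)"
proof -
  have len: "\<And>l. length (rha_Y (\<lambda>l. S l \<omega>) l (C l \<omega>)) = 2 ^ l"
  proof -
    fix l show "length (rha_Y (\<lambda>l. S l \<omega>) l (C l \<omega>)) = 2 ^ l"
      using rha_Y_eq[of l l "\<lambda>l. S l \<omega>"] by simp
  qed
  show ?thesis unfolding rha_X_def
    using concat_pos[where f="\<lambda>m. rha_Y (\<lambda>l. S l \<omega>) m (C m \<omega>)", OF len assms] by simp
qed

lemma rha_block_eq:
  assumes j: "2 ^ d \<le> j" "j < 2 ^ Suc d"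
  shows "rha_block S C n j \<omega> = take (2 ^ n) (drop ((j - 2 ^ d) * 2 ^ n) (rha_Y (\<lambda>l. S l \<omega>) (n + d) (C (n + d) \<omega>)))"
    (is "_ = take _ (drop _ ?Y)")
proof (rule nth_equalityI)
  have lenY: "length ?Y = 2 ^ (n + d)" using rha_Y_eq[of "n+d" "n+d" "\<lambda>l. S l \<omega>"] by simp
  have b1: "(j - 2 ^ d) * 2 ^ n + 2 ^ n \<le> 2 ^ (n + d)"
  proof -
    have "(j - 2 ^ d + 1) * 2 ^ n \<le> 2 ^ d * 2 ^ n" using j by (intro mult_le_mono1) simp
    then show ?thesis by (simp add: power_add algebra_simps)
  qed
  show "length (rha_block S C n j \<omega>) = length (take (2 ^ n) (drop ((j - 2 ^ d) * 2 ^ n) ?Y))"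
    unfolding rha_block_def using lenY b1 by simp
  fix p assume "p < length (rha_block S C n j \<omega>)"
  then have p: "p < 2 ^ n" unfolding rha_block_def by simp
  define i where "i = j * 2 ^ n + p"
  have "2 ^ d * 2 ^ n \<le> j * 2 ^ n" using j by (intro mult_le_mono1) simp
  then have i1: "2 ^ (n + d) \<le> i" unfolding i_def power_add by (simp add: mult.commute trans_le_add1)
  have i2: "i < 2 ^ Suc (n + d)"
  proof -
    have "(j + 1) * 2 ^ n \<le> 2 ^ Suc d * 2 ^ n" using j by (intro mult_le_mono1) simp
    then show ?thesis unfolding i_def using p by (simp add: power_add algebra_simps)
  qed
  have pa: "(2::nat) ^ (n + d) = 2 ^ d * 2 ^ n" by (simp add: power_add)
  have ii: "i - 2 ^ (n + d) = (j - 2 ^ d) * 2 ^ n + p"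
    unfolding i_def pa using j by (simp add: diff_mult_distrib)
  have "rha_block S C n j \<omega> ! p = rha_X S C \<omega> i"
    unfolding rha_block_def i_def using p by simp
  also have "\<dots> = ?Y ! ((j - 2 ^ d) * 2 ^ n + p)" using rha_X_eq[OF i1 i2] ii by simp
  also have "\<dots> = take (2 ^ n) (drop ((j - 2 ^ d) * 2 ^ n) ?Y) ! p" using p b1 lenY by simp
  finally show "rha_block S C n j \<omega> ! p = take (2 ^ n) (drop ((j - 2 ^ d) * 2 ^ n) ?Y) ! p" .
qed

definition "ES S N \<omega> = map (\<lambda>l. lex_enum (S l \<omega>)) [1..<N+1]"

lemma length_ES[simp]: "length (ES S N \<omega>) = N" by (simp add: ES_def)

lemma rha_block_dsc:
  assumes j: "2 ^ d \<le> j" "j < 2 ^ Suc d" and N: "n + d \<le> N"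
  shows "rha_block S C n j \<omega> = rY (ES S N \<omega>) n (dsc (drop n (ES S N \<omega>)) d (j - 2 ^ d) (C (n + d) \<omega>))"
proof -
  have t: "j - 2 ^ d < 2 ^ d" using j by simp
  show ?thesis unfolding rha_block_eq[OF j] rha_Y_eq[OF N, of "\<lambda>l. S l \<omega>"] ES_def[symmetric]
    by (rule rY_dsc[OF t]) (simp add: N)
qed

lemma unif_of_const:
  assumes U: "finite U" "U \<noteq> {}"
    and inU: "\<And>z. z \<in> U \<Longrightarrow> pmf Q z = c" and outU: "\<And>z. z \<notin> U \<Longrightarrow> pmf Q z = 0"
  shows "Q = pmf_of_set U"
proof -
  have sub: "set_pmf Q \<subseteq> U" using outU by (metis pmf_eq_0_set_pmf subsetI)
  have "1 = sum (pmf Q) U" using sum_pmf_eq_1[OF U(1) sub] by simp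
  also have "\<dots> = real (card U) * c" using inU by simp
  finally have c: "c = 1 / real (card U)" using U by (simp add: field_simps)
  show ?thesis
  proof (rule pmf_eqI)
    fix z show "pmf Q z = pmf (pmf_of_set U) z"
      using U inU outU c by (cases "z \<in> U") auto
  qed
qed

lemma card_supsets:
  assumes U: "finite U" and F: "F \<subseteq> U"
  shows "card {A. A \<subseteq> U \<and> card A = k \<and> F \<subseteq> A} = (if card F \<le> k then (card U - card F) choose (k - card F) else 0)"
proof (cases "card F \<le> k")
  case False
  have e: "{A. A \<subseteq> U \<and> card A = k \<and> F \<subseteq> A} = {}"
  proof safe
    fix A assume "A \<subseteq> U" "F \<subseteq> A" "k = card A"
    then have "card F \<le> card A" using U by (intro card_mono) (auto intro: finite_subset)
    then show "A \<in> {}" using False \<open>k = card A\<close> by simp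
  qed
  show ?thesis using False by (subst e) simp
next
  case True
  have finF: "finite F" using U F by (rule finite_subset[rotated])
  have "bij_betw (\<lambda>A. A - F) {A. A \<subseteq> U \<and> card A = k \<and> F \<subseteq> A} {B. B \<subseteq> U - F \<and> card B = k - card F}"
  proof (rule bij_betw_byWitness[where f'="\<lambda>B. B \<union> F"])
    show "\<forall>A\<in>{A. A \<subseteq> U \<and> card A = k \<and> F \<subseteq> A}. A - F \<union> F = A" by auto
    show "\<forall>B\<in>{B. B \<subseteq> U - F \<and> card B = k - card F}. B \<union> F - F = B" by auto
    show "(\<lambda>A. A - F) ` {A. A \<subseteq> U \<and> card A = k \<and> F \<subseteq> A} \<subseteq> {B. B \<subseteq> U - F \<and> card B = k - card F}"
      using U finF by (auto simp: card_Diff_subset)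
    show "(\<lambda>B. B \<union> F) ` {B. B \<subseteq> U - F \<and> card B = k - card F} \<subseteq> {A. A \<subseteq> U \<and> card A = k \<and> F \<subseteq> A}"
    proof (rule image_subsetI)
      fix B assume "B \<in> {B. B \<subseteq> U - F \<and> card B = k - card F}"
      then have B: "B \<subseteq> U - F" "card B = k - card F" by auto
      have finB: "finite B" using B U by (meson Diff_subset finite_subset)
      have "card (B \<union> F) = card B + card F" using B finB finF by (intro card_Un_disjoint) auto
      then show "B \<union> F \<in> {A. A \<subseteq> U \<and> card A = k \<and> F \<subseteq> A}" using B True F by auto
    qed
  qed
  then have "card {A. A \<subseteq> U \<and> card A = k \<and> F \<subseteq> A} = card {B. B \<subseteq> U - F \<and> card B = k - card F}"
    by (rule bij_betw_same_card)
  also have "\<dots> = card (U - F) choose (k - card F)" using U by (intro n_subsets) auto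
  also have "card (U - F) = card U - card F" using F finF by (intro card_Diff_subset) auto
  finally show ?thesis using True by simp
qed

lemma nth_bij:
  assumes "distinct xs" "length xs = k'"
  shows "bij_betw (\<lambda>c. xs ! (c - 1)) {1..k'} (set xs)"
proof -
  have b1: "bij_betw (\<lambda>c. c - 1) {1..k'} {..<k'}"
    by (rule bij_betw_byWitness[where f'="\<lambda>i. i + 1"]) auto
  have b2: "bij_betw ((!) xs) {..<k'} (set xs)" using assms by (intro bij_betw_nth) auto
  show ?thesis using bij_betw_trans[OF b1 b2] by (simp add: comp_def)
qed

lemma rha_subsets_facts:
  assumes "0 < k'" "k' \<le> K ^ 2"
  shows "finite (rha_subsets K k')" "rha_subsets K k' \<noteq> {}"
    "\<And>A. A \<in> rha_subsets K k' \<Longrightarrow> finite A \<and> card A = k' \<and> A \<subseteq> {1..K} \<times> {1..K}"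
proof -
  have cU: "card ({1..K} \<times> {1..K}) = K ^ 2" by (simp add: card_cartesian_product power2_eq_square)
  show "finite (rha_subsets K k')" unfolding rha_subsets_def by (rule finite_subset[of _ "Pow ({1..K} \<times> {1..K})"]) auto
  have "card (rha_subsets K k') = K ^ 2 choose k'" unfolding rha_subsets_def using n_subsets[of "{1..K} \<times> {1..K}" k'] cU by simp
  then show "rha_subsets K k' \<noteq> {}" using assms by (metis card.empty zero_less_binomial_iff not_less0 card_gt_0_iff)
  fix A assume "A \<in> rha_subsets K k'" then show "finite A \<and> card A = k' \<and> A \<subseteq> {1..K} \<times> {1..K}"
    unfolding rha_subsets_def by (auto intro: finite_subset)
qed

lemma U1:
  assumes k': "0 < k'" "k' \<le> K ^ 2"
  shows "map_pmf (\<lambda>(e, c). e ! (c - 1)) (pair_pmf (map_pmf lex_enum (pmf_of_set (rha_subsets K k'))) (pmf_of_set {1..k'}))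
    = pmf_of_set ({1..K} \<times> {1..K})"
proof -
  let ?S = "rha_subsets K k'" and ?U = "{1..K} \<times> {1..K}"
  note SF = rha_subsets_facts[OF k']
  have "map_pmf (\<lambda>(e, c). e ! (c - 1)) (pair_pmf (map_pmf lex_enum (pmf_of_set ?S)) (pmf_of_set {1..k'}))
      = bind_pmf (pmf_of_set ?S) (\<lambda>A. map_pmf (\<lambda>c. lex_enum A ! (c - 1)) (pmf_of_set {1..k'}))"
    by (simp add: pair_pmf_def map_pmf_def bind_assoc_pmf bind_return_pmf)
  also have "\<dots> = bind_pmf (pmf_of_set ?S) pmf_of_set"
  proof (rule bind_pmf_cong[OF refl])
    fix A assume "A \<in> set_pmf (pmf_of_set ?S)"
    then have A: "finite A" "card A = k'" using SF by auto
    have "bij_betw (\<lambda>c. lex_enum A ! (c - 1)) {1..k'} A"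
      using nth_bij[OF lex_enum_distinct[OF A(1)]] lex_enum_length[OF A(1)] lex_enum(2)[OF A(1)] A by simp
    then show "map_pmf (\<lambda>c. lex_enum A ! (c - 1)) (pmf_of_set {1..k'}) = pmf_of_set A"
      using k' by (intro map_pmf_of_set_bij_betw) auto
  qed
  also have "\<dots> = pmf_of_set ?U"
  proof (rule unif_of_const)
    show "finite ?U" by simp
    show "?U \<noteq> {}" using k' by (cases K) auto
    have eq: "pmf (bind_pmf (pmf_of_set ?S) pmf_of_set) z = real (card {A. A \<subseteq> ?U \<and> card A = k' \<and> {z} \<subseteq> A}) / (real k' * card ?S)" for z
    proof -
      have "pmf (bind_pmf (pmf_of_set ?S) pmf_of_set) z = (\<Sum>A\<in>?S. pmf (pmf_of_set A) z) / card ?S"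
        using SF by (intro pmf_bind_pmf_of_set) auto
      also have "(\<Sum>A\<in>?S. pmf (pmf_of_set A) z) = (\<Sum>A\<in>?S. if z \<in> A then 1 / real k' else 0)"
        proof (rule sum.cong[OF refl])
        fix A assume "A \<in> ?S"
        then have "finite A" "card A = k'" using SF by auto
        then have "A \<noteq> {}" using k' by auto
        then show "pmf (pmf_of_set A) z = (if z \<in> A then 1 / real k' else 0)"
          using \<open>finite A\<close> \<open>card A = k'\<close> by (simp add: indicator_def)
      qed
      also have "\<dots> = (\<Sum>A\<in>{A \<in> ?S. z \<in> A}. 1 / real k')" by (simp only: sum.inter_filter[OF SF(1)])
      also have "{A \<in> ?S. z \<in> A} = {A. A \<subseteq> ?U \<and> card A = k' \<and> {z} \<subseteq> A}" unfolding rha_subsets_def by auto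
      finally show ?thesis by simp
    qed
    fix z
    show "z \<in> ?U \<Longrightarrow> pmf (bind_pmf (pmf_of_set ?S) pmf_of_set) z = real ((card ?U - 1) choose (k' - 1)) / (real k' * card ?S)"
      unfolding eq using k' by (subst card_supsets) auto
    assume "z \<notin> ?U"
    then have "{A. A \<subseteq> ?U \<and> card A = k' \<and> {z} \<subseteq> A} = {}" by auto
    then show "pmf (bind_pmf (pmf_of_set ?S) pmf_of_set) z = 0" unfolding eq by simp
  qed
  finally show ?thesis .
qed

lemma U2:
  assumes k': "0 < k'" "k' \<le> K ^ 2"
  shows "map_pmf (\<lambda>(e, (a, b)). (snd (e ! (a - 1)), fst (e ! (b - 1))))
      (pair_pmf (map_pmf lex_enum (pmf_of_set (rha_subsets K k'))) (pmf_of_set ({1..k'} \<times> {1..k'})))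
    = pmf_of_set ({1..K} \<times> {1..K})"
proof -
  let ?S = "rha_subsets K k'" and ?U = "{1..K} \<times> {1..K}"
  define \<phi> :: "(nat \<times> nat) \<times> (nat \<times> nat) \<Rightarrow> nat \<times> nat" where "\<phi> = (\<lambda>(p, q). (snd p, fst q))"
  note SF = rha_subsets_facts[OF k']
  have K: "0 < K" using k' by (cases K) auto
  have "map_pmf (\<lambda>(e, (a, b)). (snd (e ! (a - 1)), fst (e ! (b - 1))))
      (pair_pmf (map_pmf lex_enum (pmf_of_set ?S)) (pmf_of_set ({1..k'} \<times> {1..k'})))
    = bind_pmf (pmf_of_set ?S) (\<lambda>A. map_pmf (\<lambda>(a, b). (snd (lex_enum A ! (a - 1)), fst (lex_enum A ! (b - 1)))) (pmf_of_set ({1..k'} \<times> {1..k'})))"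
    by (simp add: pair_pmf_def map_pmf_def bind_assoc_pmf bind_return_pmf case_prod_unfold)
  also have "\<dots> = bind_pmf (pmf_of_set ?S) (\<lambda>A. map_pmf \<phi> (pmf_of_set (A \<times> A)))"
  proof (rule bind_pmf_cong[OF refl])
    fix A assume "A \<in> set_pmf (pmf_of_set ?S)"
    then have A: "finite A" "card A = k'" using SF by auto
    have b: "bij_betw (\<lambda>c. lex_enum A ! (c - 1)) {1..k'} A"
      using nth_bij[OF lex_enum_distinct[OF A(1)]] lex_enum_length[OF A(1)] lex_enum(2)[OF A(1)] A by simp
    have "map_pmf (map_prod (\<lambda>c. lex_enum A ! (c - 1)) (\<lambda>c. lex_enum A ! (c - 1))) (pmf_of_set ({1..k'} \<times> {1..k'}))
        = pmf_of_set (A \<times> A)"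
      using k' by (intro map_pmf_of_set_bij_betw bij_betw_map_prod b) auto
    then have "map_pmf \<phi> (pmf_of_set (A \<times> A)) = map_pmf \<phi> (map_pmf (map_prod (\<lambda>c. lex_enum A ! (c - 1)) (\<lambda>c. lex_enum A ! (c - 1))) (pmf_of_set ({1..k'} \<times> {1..k'})))"
      by simp
    then show "map_pmf (\<lambda>(a, b). (snd (lex_enum A ! (a - 1)), fst (lex_enum A ! (b - 1)))) (pmf_of_set ({1..k'} \<times> {1..k'}))
        = map_pmf \<phi> (pmf_of_set (A \<times> A))"
      by (simp add: map_pmf_comp \<phi>_def case_prod_unfold)
  qed
  also have "\<dots> = map_pmf \<phi> (bind_pmf (pmf_of_set ?S) (\<lambda>A. pmf_of_set (A \<times> A)))"
    by (simp add: map_bind_pmf)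
  also have "\<dots> = pmf_of_set ?U"
  proof (rule unif_of_const)
    let ?D = "bind_pmf (pmf_of_set ?S) (\<lambda>A. pmf_of_set (A \<times> A))"
    show "finite ?U" by simp
    show "?U \<noteq> {}" using K by auto
    define c where "c = (\<lambda>j. real (if j \<le> k' then (card ?U - j) choose (k' - j) else 0) / (real k' * real k' * card ?S))"
    have eqD: "pmf ?D (p, q) = c (card {p, q})" if pq: "p \<in> ?U" "q \<in> ?U" for p q
    proof -
      have "pmf ?D (p, q) = (\<Sum>A\<in>?S. pmf (pmf_of_set (A \<times> A)) (p, q)) / card ?S"
        using SF by (intro pmf_bind_pmf_of_set) auto
      also have "(\<Sum>A\<in>?S. pmf (pmf_of_set (A \<times> A)) (p, q)) = (\<Sum>A\<in>?S. if {p, q} \<subseteq> A then 1 / (real k' * real k') else 0)"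
      proof (rule sum.cong[OF refl])
        fix A assume "A \<in> ?S"
        then have "finite A" "card A = k'" using SF by auto
        then have "A \<noteq> {}" using k' by auto
        then show "pmf (pmf_of_set (A \<times> A)) (p, q) = (if {p, q} \<subseteq> A then 1 / (real k' * real k') else 0)"
          using \<open>finite A\<close> \<open>card A = k'\<close> by (simp add: indicator_def card_cartesian_product)
      qed
      also have "\<dots> = (\<Sum>A\<in>{A \<in> ?S. {p, q} \<subseteq> A}. 1 / (real k' * real k'))" by (simp only: sum.inter_filter[OF SF(1)])
      also have "{A \<in> ?S. {p, q} \<subseteq> A} = {A. A \<subseteq> ?U \<and> card A = k' \<and> {p, q} \<subseteq> A}" unfolding rha_subsets_def by auto
      finally have "pmf ?D (p, q) = real (card {A. A \<subseteq> ?U \<and> card A = k' \<and> {p, q} \<subseteq> A}) / (real k' * real k' * card ?S)"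
        by simp
      moreover have "card {A. A \<subseteq> ?U \<and> card A = k' \<and> {p, q} \<subseteq> A} = (if card {p, q} \<le> k' then (card ?U - card {p, q}) choose (k' - card {p, q}) else 0)"
        using pq by (intro card_supsets) auto
      ultimately show ?thesis unfolding c_def by simp
    qed
    have setD: "set_pmf ?D \<subseteq> ?U \<times> ?U"
    proof
      fix z assume "z \<in> set_pmf ?D"
      then obtain A where A: "A \<in> ?S" "z \<in> set_pmf (pmf_of_set (A \<times> A))" using SF by auto
      then have "finite A" "card A = k'" "A \<subseteq> ?U" using SF by auto
      then have "A \<noteq> {}" using k' by auto
      then show "z \<in> ?U \<times> ?U" using A \<open>finite A\<close> \<open>A \<subseteq> ?U\<close> by auto
    qed
    have pm: "pmf (map_pmf \<phi> ?D) xy = (\<Sum>z\<in>\<phi> -` {xy} \<inter> (?U \<times> ?U). pmf ?D z)" for xy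
    proof -
      have "pmf (map_pmf \<phi> ?D) xy = measure ?D (\<phi> -` {xy})" by (rule pmf_map)
      also have "\<dots> = measure ?D (\<phi> -` {xy} \<inter> set_pmf ?D)" by (rule measure_Int_set_pmf[symmetric])
      also have "\<phi> -` {xy} \<inter> set_pmf ?D = (\<phi> -` {xy} \<inter> (?U \<times> ?U)) \<inter> set_pmf ?D" using setD by auto
      also have "measure ?D \<dots> = measure ?D (\<phi> -` {xy} \<inter> (?U \<times> ?U))" by (rule measure_Int_set_pmf)
      also have "\<dots> = (\<Sum>z\<in>\<phi> -` {xy} \<inter> (?U \<times> ?U). pmf ?D z)" by (rule measure_measure_pmf_finite) simp
      finally show ?thesis .
    qed
    fix xy :: "nat \<times> nat"
    obtain x y where xy: "xy = (x, y)" by (cases xy)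
    show "xy \<in> ?U \<Longrightarrow> pmf (map_pmf \<phi> ?D) xy = c 1 + real (K * K - 1) * c 2"
    proof -
      assume "xy \<in> ?U"
      then have x: "x \<in> {1..K}" and y: "y \<in> {1..K}" using xy by auto
      define Fib where "Fib = \<phi> -` {xy} \<inter> (?U \<times> ?U)"
      have Fib: "Fib = ({1..K} \<times> {x}) \<times> ({y} \<times> {1..K})" unfolding Fib_def \<phi>_def xy using x y by auto
      define z0 where "z0 = ((y, x), (y, x))"
      have z0: "z0 \<in> Fib" unfolding Fib z0_def using x y by auto
      have cF: "card Fib = K * K" unfolding Fib by (simp add: card_cartesian_product)
      have "(\<Sum>z\<in>Fib. pmf ?D z) = pmf ?D z0 + (\<Sum>z\<in>Fib - {z0}. pmf ?D z)"
        using z0 by (simp add: sum.remove Fib)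
      also have "pmf ?D z0 = c 1" unfolding z0_def using x y by (subst eqD) auto
      also have "(\<Sum>z\<in>Fib - {z0}. pmf ?D z) = (\<Sum>z\<in>Fib - {z0}. c 2)"
      proof (rule sum.cong[OF refl])
        fix z assume z: "z \<in> Fib - {z0}"
        obtain p q where pq: "z = (p, q)" by (cases z)
        have pq': "p \<in> ?U" "q \<in> ?U" "p \<noteq> q" using z x y unfolding pq Fib z0_def by auto
        then have "card {p, q} = 2" by simp
        then show "pmf ?D z = c 2" unfolding pq using eqD[OF pq'(1,2)] by simp
      qed
      also have "\<dots> = real (K * K - 1) * c 2" using z0 cF by (simp add: Fib)
      finally show ?thesis using pm Fib_def by simp
    qed
    assume "xy \<notin> ?U"
    then have "\<phi> -` {xy} \<inter> (?U \<times> ?U) = {}" unfolding \<phi>_def xy by auto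
    then show "pmf (map_pmf \<phi> ?D) xy = 0" using pm by simp
  qed
  finally show ?thesis .
qed

fun Plist :: "'a pmf list \<Rightarrow> 'a list pmf" where
  "Plist [] = return_pmf []"
| "Plist (p # ps) = map_pmf (\<lambda>(x, xs). x # xs) (pair_pmf p (Plist ps))"

lemma Plist_append: "Plist (ps @ qs) = map_pmf (\<lambda>(a, b). a @ b) (pair_pmf (Plist ps) (Plist qs))"
  by (induction ps)
     (simp_all add: pair_pmf_def map_pmf_def bind_assoc_pmf bind_return_pmf bind_return_pmf')

lemma Plist_single: "Plist [p] = map_pmf (\<lambda>x. [x]) p"
  by (simp add: pair_pmf_def map_pmf_def bind_assoc_pmf bind_return_pmf bind_return_pmf')

lemma set_Plist: "vs \<in> set_pmf (Plist ps) \<Longrightarrow> length vs = length ps \<and> (\<forall>i<length ps. vs ! i \<in> set_pmf (ps ! i))"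
proof (induction ps arbitrary: vs)
  case Nil then show ?case by simp
next
  case (Cons p ps)
  then obtain x xs where "vs = x # xs" "x \<in> set_pmf p" "xs \<in> set_pmf (Plist ps)" by auto
  then show ?case using Cons.IH by (auto simp: nth_Cons split: nat.split)
qed

lemma pmf_Plist: "pmf (Plist ps) vs = (if length vs = length ps then (\<Prod>i<length ps. pmf (ps ! i) (vs ! i)) else 0)"
proof (induction ps arbitrary: vs)
  case Nil then show ?case by (cases vs) (auto simp: indicator_def)
next
  case (Cons p ps)
  have inj: "inj (\<lambda>(x::'a, xs). x # xs)" by (auto simp: inj_def)
  show ?case
  proof (cases vs)
    case Nil
    have "pmf (Plist (p # ps)) [] = 0"
      by (subst pmf_eq_0_set_pmf) auto
    then show ?thesis using Nil by simp
  next
    case (Cons v vs')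
    have "pmf (Plist (p # ps)) (v # vs') = pmf (pair_pmf p (Plist ps)) (v, vs')"
      using pmf_map_inj'[OF inj, of _ "(v, vs')"] by simp
    also have "\<dots> = pmf p v * pmf (Plist ps) vs'" by (simp add: pmf_pair)
    moreover have "(\<Prod>i<length (p # ps). pmf ((p # ps) ! i) ((v # vs') ! i)) = pmf p v * (\<Prod>i<length ps. pmf (ps ! i) (vs' ! i))"
      by (simp only: length_Cons prod.lessThan_Suc_shift nth_Cons_0 nth_Cons_Suc)
    ultimately show ?thesis using Cons Cons.IH by simp
  qed
qed

lemma pmf_of_set_times:
  assumes "finite A" "finite B" "A \<noteq> {}" "B \<noteq> {}"
  shows "pmf_of_set (A \<times> B) = pair_pmf (pmf_of_set A) (pmf_of_set B)"
proof (rule pmf_eqI)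
  fix z :: "'a \<times> 'b"
  show "pmf (pmf_of_set (A \<times> B)) z = pmf (pair_pmf (pmf_of_set A) (pmf_of_set B)) z"
    using assms by (cases z) (simp add: pmf_pair indicator_def card_cartesian_product)
qed

definition Eq :: "(nat \<Rightarrow> nat) \<Rightarrow> nat \<Rightarrow> (nat \<times> nat) list pmf" where
  "Eq k l = map_pmf lex_enum (pmf_of_set (rha_subsets (k (l - 1)) (k l)))"
definition Cq :: "(nat \<Rightarrow> nat) \<Rightarrow> nat \<Rightarrow> nat pmf" where
  "Cq k l = pmf_of_set {1..k l}"
definition U2q :: "(nat \<Rightarrow> nat) \<Rightarrow> nat \<Rightarrow> (nat \<times> nat) pmf" where
  "U2q k l = pmf_of_set ({1..k l} \<times> {1..k l})"
definition Ed :: "(nat \<Rightarrow> nat) \<Rightarrow> nat \<Rightarrow> nat \<Rightarrow> (nat \<times> nat) list list pmf" where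
  "Ed k n d = Plist (map (Eq k) [Suc n..<Suc (n + d)])"

locale kseq =
  fixes k :: "nat \<Rightarrow> nat"
  assumes kpos: "\<And>l. 0 < k l" and kup: "\<And>l. k (Suc l) \<le> k l ^ 2"
begin

lemma lr_unif: "map_pmf (\<lambda>(e, c). e ! (c - 1)) (pair_pmf (Eq k (Suc l)) (Cq k (Suc l))) = U2q k l"
  unfolding Eq_def Cq_def U2q_def using U1[OF kpos kup] by simp

lemma cross_unif: "map_pmf (\<lambda>(e, (a, b)). (snd (e ! (a - 1)), fst (e ! (b - 1)))) (pair_pmf (Eq k (Suc l)) (U2q k (Suc l))) = U2q k l"
  unfolding Eq_def Cq_def U2q_def using U2[OF kpos kup] by simp

lemma U2q_pair: "U2q k l = pair_pmf (Cq k l) (Cq k l)"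
  unfolding U2q_def Cq_def using kpos[of l] by (intro pmf_of_set_times) auto

lemma child_unif: "map_pmf (\<lambda>(e, c). (if b then snd else fst) (e ! (c - 1))) (pair_pmf (Eq k (Suc l)) (Cq k (Suc l))) = Cq k l"
proof -
  have "map_pmf (\<lambda>(e, c). (if b then snd else fst) (e ! (c - 1))) (pair_pmf (Eq k (Suc l)) (Cq k (Suc l)))
     = map_pmf (if b then snd else fst) (map_pmf (\<lambda>(e, c). e ! (c - 1)) (pair_pmf (Eq k (Suc l)) (Cq k (Suc l))))"
    by (cases b) (simp_all add: map_pmf_comp case_prod_unfold)
  also have "\<dots> = Cq k l" unfolding lr_unif U2q_pair by (simp add: map_fst_pair_pmf map_snd_pair_pmf)
  finally show ?thesis .
qed

end

lemma Ed_0: "Ed k n 0 = return_pmf []" by (simp add: Ed_def)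

lemma Ed_Suc: "Ed k n (Suc d) = map_pmf (\<lambda>(s, e). s @ [e]) (pair_pmf (Ed k n d) (Eq k (Suc (n + d))))"
proof -
  have "[Suc n..<Suc (n + Suc d)] = [Suc n..<Suc (n + d)] @ [Suc (n + d)]" by simp
  then show ?thesis unfolding Ed_def
    by (simp del: Plist.simps upt_Suc add: Plist_append Plist_single pair_map_pmf2 map_pmf_comp case_prod_unfold)
qed

lemma set_Ed: "s \<in> set_pmf (Ed k n d) \<Longrightarrow> length s = d"
  unfolding Ed_def using set_Plist by fastforce

lemma dsc_append: "dsc (s @ r) (length s) t c = dsc s (length s) t c"
  by (rule dsc_cong) (simp add: nth_append)

lemma dsc_snoc: "length s = d \<Longrightarrow>
  dsc (s @ [e]) (Suc d) t c = dsc s d (t mod 2 ^ d) ((if 2 ^ d \<le> t then snd else fst) (e ! (c - 1)))"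
  by (hypsubst) (simp add: dsc_append)

lemma step:
  assumes "\<And>s e c. s \<in> set_pmf A \<Longrightarrow> F (s @ [e], c) = \<Psi> s (h e c)"
  shows "map_pmf F (pair_pmf (map_pmf (\<lambda>(s, e). s @ [e]) (pair_pmf A B)) C)
       = map_pmf (\<lambda>(s, z). \<Psi> s z) (pair_pmf A (map_pmf (\<lambda>(e, c). h e c) (pair_pmf B C)))"
proof -
  have "map_pmf F (pair_pmf (map_pmf (\<lambda>(s, e). s @ [e]) (pair_pmf A B)) C)
      = map_pmf (\<lambda>(s, e, c). F (s @ [e], c)) (pair_pmf A (pair_pmf B C))"
    by (simp add: pair_map_pmf1 pair_pair_pmf map_pmf_comp case_prod_unfold apfst_def map_prod_def)
  also have "\<dots> = map_pmf (\<lambda>(s, e, c). \<Psi> s (h e c)) (pair_pmf A (pair_pmf B C))"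
    by (rule map_pmf_cong) (auto simp: assms)
  also have "\<dots> = map_pmf (\<lambda>(s, z). \<Psi> s z) (pair_pmf A (map_pmf (\<lambda>(e, c). h e c) (pair_pmf B C)))"
    by (simp add: pair_map_pmf2 map_pmf_comp case_prod_unfold apsnd_def map_prod_def)
  finally show ?thesis .
qed

lemma mod_sub_pow: "2 ^ d \<le> (x::nat) \<Longrightarrow> x < 2 ^ Suc d \<Longrightarrow> x mod 2 ^ d = x - 2 ^ d"
  by (simp add: le_mod_geq)

context kseq begin

lemma child_fst: "map_pmf (\<lambda>(e, c). fst (e ! (c - 1))) (pair_pmf (Eq k (Suc l)) (Cq k (Suc l))) = Cq k l"
  using child_unif[of False l] by simp

lemma child_snd: "map_pmf (\<lambda>(e, c). snd (e ! (c - 1))) (pair_pmf (Eq k (Suc l)) (Cq k (Suc l))) = Cq k l"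
  using child_unif[of True l] by simp

lemma core:
 "(\<forall>t<2^d. map_pmf (\<lambda>(s, c). dsc s d t c) (pair_pmf (Ed k n d) (Cq k (n + d))) = Cq k n) \<and>
  (\<forall>t. Suc t < 2^d \<longrightarrow> map_pmf (\<lambda>(s, c). (dsc s d t c, dsc s d (Suc t) c)) (pair_pmf (Ed k n d) (Cq k (n + d))) = U2q k n) \<and>
  map_pmf (\<lambda>(s, (a, b)). (dsc s d (2^d - 1) a, dsc s d 0 b)) (pair_pmf (Ed k n d) (U2q k (n + d))) = U2q k n"
proof (induction d)
  case 0
  show ?case by (simp add: Ed_0 pair_return_pmf1 map_pmf_comp case_prod_unfold)
next
  case (Suc d)
  note IH1 = Suc.IH[THEN conjunct1, rule_format]
  note IH2 = Suc.IH[THEN conjunct2, THEN conjunct1, rule_format]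
  note IH3 = Suc.IH[THEN conjunct2, THEN conjunct2]
  have nd: "n + Suc d = Suc (n + d)" by simp
  have P1: "map_pmf (\<lambda>(s, c). dsc s (Suc d) t c) (pair_pmf (Ed k n (Suc d)) (Cq k (n + Suc d))) = Cq k n"
    if t: "t < 2 ^ Suc d" for t
  proof -
    have "map_pmf (\<lambda>(s, c). dsc s (Suc d) t c) (pair_pmf (Ed k n (Suc d)) (Cq k (n + Suc d)))
      = map_pmf (\<lambda>(s, z). dsc s d (t mod 2 ^ d) z)
          (pair_pmf (Ed k n d) (map_pmf (\<lambda>(e, c). (if 2 ^ d \<le> t then snd else fst) (e ! (c - 1)))
             (pair_pmf (Eq k (Suc (n + d))) (Cq k (Suc (n + d))))))"
      unfolding Ed_Suc nd by (rule step) (simp del: dsc.simps(2) add: dsc_snoc set_Ed)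
    also have "\<dots> = map_pmf (\<lambda>(s, z). dsc s d (t mod 2 ^ d) z) (pair_pmf (Ed k n d) (Cq k (n + d)))"
      by (simp only: child_unif)
    also have "\<dots> = Cq k n" using IH1[of "t mod 2 ^ d"] by simp
    finally show ?thesis .
  qed
  have P3: "map_pmf (\<lambda>(s, (a, b)). (dsc s (Suc d) (2^Suc d - 1) a, dsc s (Suc d) 0 b))
      (pair_pmf (Ed k n (Suc d)) (U2q k (n + Suc d))) = U2q k n"
  proof -
    have o: "1 \<le> (2::nat) ^ d" by simp
    have m2: "2 ^ d \<le> (2::nat) ^ Suc d - 1" using o by simp
    have m1: "((2::nat) ^ Suc d - 1) mod 2 ^ d = 2 ^ d - 1" using mod_sub_pow[OF m2] o by simp
    have m3: "(2 * (2::nat) ^ d - Suc 0) mod 2 ^ d = 2 ^ d - Suc 0" using m1 by simp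
    note m = m1 m2 m3
    have "map_pmf (\<lambda>(s, (a, b)). (dsc s (Suc d) (2^Suc d - 1) a, dsc s (Suc d) 0 b))
      (pair_pmf (Ed k n (Suc d)) (U2q k (n + Suc d)))
      = map_pmf (\<lambda>(s, z). (case z of (a, b) \<Rightarrow> (dsc s d (2^d - 1) a, dsc s d 0 b)))
          (pair_pmf (Ed k n d) (map_pmf (\<lambda>(e, c). (case c of (a, b) \<Rightarrow> (snd (e ! (a - 1)), fst (e ! (b - 1)))))
             (pair_pmf (Eq k (Suc (n + d))) (U2q k (Suc (n + d))))))"
      unfolding Ed_Suc nd by (rule step) (auto simp del: dsc.simps(2) simp add: dsc_snoc set_Ed m)
    also have "\<dots> = map_pmf (\<lambda>(s, z). (case z of (a, b) \<Rightarrow> (dsc s d (2^d - 1) a, dsc s d 0 b))) (pair_pmf (Ed k n d) (U2q k (n + d)))"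
      using cross_unif[of "n + d"] by simp
    also have "\<dots> = U2q k n" using IH3 by simp
    finally show ?thesis .
  qed
  have P2: "map_pmf (\<lambda>(s, c). (dsc s (Suc d) t c, dsc s (Suc d) (Suc t) c)) (pair_pmf (Ed k n (Suc d)) (Cq k (n + Suc d))) = U2q k n"
    if t: "Suc t < 2 ^ Suc d" for t
  proof (cases "Suc t < 2 ^ d")
    case True
    have "map_pmf (\<lambda>(s, c). (dsc s (Suc d) t c, dsc s (Suc d) (Suc t) c)) (pair_pmf (Ed k n (Suc d)) (Cq k (n + Suc d)))
      = map_pmf (\<lambda>(s, z). (dsc s d t z, dsc s d (Suc t) z))
          (pair_pmf (Ed k n d) (map_pmf (\<lambda>(e, c). fst (e ! (c - 1)))
             (pair_pmf (Eq k (Suc (n + d))) (Cq k (Suc (n + d))))))"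
      unfolding Ed_Suc nd by (rule step) (use True in \<open>simp del: dsc.simps(2) add: dsc_snoc set_Ed\<close>)
    also have "\<dots> = map_pmf (\<lambda>(s, z). (dsc s d t z, dsc s d (Suc t) z)) (pair_pmf (Ed k n d) (Cq k (n + d)))"
      by (simp only: child_fst)
    also have "\<dots> = U2q k n" using IH2[OF True] by simp
    finally show ?thesis .
  next
    case False
    show ?thesis
    proof (cases "2 ^ d \<le> t")
      case True
      have m: "t mod 2 ^ d = t - 2 ^ d" "Suc t mod 2 ^ d = Suc (t - 2 ^ d)"
        using True t by (simp_all add: mod_sub_pow Suc_diff_le)
      have lt: "Suc (t - 2 ^ d) < 2 ^ d" using t True by simp
      have "map_pmf (\<lambda>(s, c). (dsc s (Suc d) t c, dsc s (Suc d) (Suc t) c)) (pair_pmf (Ed k n (Suc d)) (Cq k (n + Suc d)))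
        = map_pmf (\<lambda>(s, z). (dsc s d (t - 2 ^ d) z, dsc s d (Suc (t - 2 ^ d)) z))
            (pair_pmf (Ed k n d) (map_pmf (\<lambda>(e, c). snd (e ! (c - 1)))
               (pair_pmf (Eq k (Suc (n + d))) (Cq k (Suc (n + d))))))"
        unfolding Ed_Suc nd by (rule step) (use True in \<open>simp del: dsc.simps(2) add: dsc_snoc set_Ed m\<close>)
      also have "\<dots> = map_pmf (\<lambda>(s, z). (dsc s d (t - 2 ^ d) z, dsc s d (Suc (t - 2 ^ d)) z)) (pair_pmf (Ed k n d) (Cq k (n + d)))"
        by (simp only: child_snd)
      also have "\<dots> = U2q k n" using IH2[OF lt] by simp
      finally show ?thesis .
    next
      case False2: False
      then have st: "Suc t = 2 ^ d" using False by simp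
      have m0: "t = 2 ^ d - 1" using st by simp
      have m1: "t mod 2 ^ d = 2 ^ d - 1" using st m0 by simp
      have m2: "Suc t mod 2 ^ d = 0" using st by simp
      note m = m0 m1 m2
      have "map_pmf (\<lambda>(s, c). (dsc s (Suc d) t c, dsc s (Suc d) (Suc t) c)) (pair_pmf (Ed k n (Suc d)) (Cq k (n + Suc d)))
        = map_pmf (\<lambda>(s, z). (case z of (a, b) \<Rightarrow> (dsc s d (2^d - 1) a, dsc s d 0 b)))
            (pair_pmf (Ed k n d) (map_pmf (\<lambda>(e, c). e ! (c - 1))
               (pair_pmf (Eq k (Suc (n + d))) (Cq k (Suc (n + d))))))"
        unfolding Ed_Suc nd by (rule step) (use False2 st in \<open>auto simp del: dsc.simps(2) simp add: dsc_snoc set_Ed m split: prod.split\<close>)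
      also have "\<dots> = map_pmf (\<lambda>(s, z). (case z of (a, b) \<Rightarrow> (dsc s d (2^d - 1) a, dsc s d 0 b))) (pair_pmf (Ed k n d) (U2q k (n + d)))"
        by (simp only: lr_unif)
      also have "\<dots> = U2q k n" using IH3 by simp
      finally show ?thesis .
    qed
  qed
  show ?case using P1 P2 P3 by blast
qed

end

lemma integrable_finite_support:
  fixes f :: "'a \<Rightarrow> real"
  assumes fin: "finite {x. f x \<noteq> 0}"
  shows "integrable (count_space UNIV) f"
proof -
  let ?F = "{x. f x \<noteq> 0}"
  have eq: "f = (\<lambda>x. \<Sum>a\<in>?F. indicator {a} x * f a)"
  proof
    fix x show "f x = (\<Sum>a\<in>?F. indicator {a} x * f a)"
      using fin by (cases "f x = 0") (auto simp: indicator_def sum.delta' cong: sum.cong)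
  qed
  have "integrable (count_space UNIV) (\<lambda>x. \<Sum>a\<in>?F. indicator {a} x * f a)"
    by (rule Bochner_Integration.integrable_sum) (auto intro!: integrable_real_indicator)
  then show ?thesis by (simp only: eq[symmetric])
qed

lemma pmf_bind_single:
  assumes "\<And>g. g \<noteq> z \<Longrightarrow> pmf (F g) w = 0"
  shows "pmf (bind_pmf P F) w = pmf P z * pmf (F z) w"
proof -
  have "pmf (bind_pmf P F) w = (\<integral>g. pmf (F g) w \<partial>measure_pmf P)" by (rule pmf_bind)
  also have "\<dots> = (\<integral>g. indicator {z} g * pmf (F z) w \<partial>measure_pmf P)"
    by (rule Bochner_Integration.integral_cong) (auto simp: indicator_def assms)
  also have "\<dots> = pmf P z * pmf (F z) w"
    by (simp add: measure_pmf_single)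
  finally show ?thesis .
qed

lemma cs_pair: "count_space (UNIV::'a::countable set) \<Otimes>\<^sub>M count_space (UNIV::'b::countable set) = count_space UNIV"
  by (simp add: pair_measure_countable)

lemma distr_pmf_comp:
  assumes T: "T \<in> measurable M (count_space UNIV)"
    and D: "distr M (count_space UNIV) T = measure_pmf Q"
  shows "distributed M (count_space UNIV) (\<lambda>\<omega>. h (T \<omega>)) (\<lambda>w. ennreal (pmf (map_pmf h Q) w))"
  unfolding distributed_def
proof (intro conjI)
  have h: "h \<in> measurable (count_space UNIV) (count_space UNIV)" by simp
  have "distr M (count_space UNIV) (\<lambda>\<omega>. h (T \<omega>)) = distr (distr M (count_space UNIV) T) (count_space UNIV) h"
    using distr_distr[OF h T] by (simp add: comp_def)
  also have "\<dots> = measure_pmf (map_pmf h Q)" unfolding D by (simp add: map_pmf_rep_eq)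
  also have "\<dots> = density (count_space UNIV) (\<lambda>w. ennreal (pmf (map_pmf h Q) w))" by (rule measure_pmf_eq_density)
  finally show "distr M (count_space UNIV) (\<lambda>\<omega>. h (T \<omega>)) = density (count_space UNIV) (\<lambda>w. ennreal (pmf (map_pmf h Q) w))" .
  show "(\<lambda>w. ennreal (pmf (map_pmf h Q) w)) \<in> borel_measurable (count_space UNIV)" by simp
  show "(\<lambda>\<omega>. h (T \<omega>)) \<in> measurable M (count_space UNIV)" using measurable_compose[OF T h] by (simp add: comp_def)
qed

lemma map_pair_bind: "map_pmf h (pair_pmf P W) = bind_pmf P (\<lambda>g. map_pmf (\<lambda>w. h (g, w)) W)"
  by (simp add: pair_pmf_def map_bind_pmf map_pmf_def bind_assoc_pmf bind_return_pmf)

lemma map_pair_fst2: "map_pmf (\<lambda>(g, (v, v')). \<phi> g v) (pair_pmf P (pair_pmf U V)) = bind_pmf P (\<lambda>g. map_pmf (\<phi> g) U)"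
proof -
  have *: "map_pmf (\<lambda>w. case (g, w) of (g, v, v') \<Rightarrow> \<phi> g v) (pair_pmf U V) = map_pmf (\<phi> g) U" for g
  proof -
    have "map_pmf (\<lambda>w. case (g, w) of (g, v, v') \<Rightarrow> \<phi> g v) (pair_pmf U V) = map_pmf (\<phi> g) (map_pmf fst (pair_pmf U V))"
      by (simp add: map_pmf_comp case_prod_unfold)
    then show ?thesis by (simp only: map_fst_pair_pmf)
  qed
  show ?thesis by (subst map_pair_bind) (simp only: *)
qed

lemma map_pair_snd2: "map_pmf (\<lambda>(g, (v, v')). \<phi> g v') (pair_pmf P (pair_pmf U V)) = bind_pmf P (\<lambda>g. map_pmf (\<phi> g) V)"
proof -
  have *: "map_pmf (\<lambda>w. case (g, w) of (g, v, v') \<Rightarrow> \<phi> g v') (pair_pmf U V) = map_pmf (\<phi> g) V" for g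
  proof -
    have "map_pmf (\<lambda>w. case (g, w) of (g, v, v') \<Rightarrow> \<phi> g v') (pair_pmf U V) = map_pmf (\<phi> g) (map_pmf snd (pair_pmf U V))"
      by (simp add: map_pmf_comp case_prod_unfold)
    then show ?thesis by (simp only: map_snd_pair_pmf)
  qed
  show ?thesis by (subst map_pair_bind) (simp only: *)
qed

lemma info:
  fixes M :: "'a measure" and X Y :: "'a \<Rightarrow> 'x::countable" and Z :: "'a \<Rightarrow> 'z::countable"
    and Pg :: "'z pmf" and f :: "'z \<Rightarrow> nat \<Rightarrow> 'x" and K :: nat
  assumes P: "prob_space M"
    and meas: "(\<lambda>\<omega>. (X \<omega>, Y \<omega>, Z \<omega>)) \<in> measurable M (count_space UNIV)"
    and D: "distr M (count_space UNIV) (\<lambda>\<omega>. (X \<omega>, Y \<omega>, Z \<omega>))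
      = measure_pmf (map_pmf (\<lambda>(g, (v, v')). (f g v, f g v', g)) (pair_pmf Pg (pmf_of_set ({1..K} \<times> {1..K}))))"
    and K: "0 < K" and fin: "finite (set_pmf Pg)"
    and inj: "\<And>g. g \<in> set_pmf Pg \<Longrightarrow> inj_on (f g) {1..K}"
  shows "prob_space.conditional_entropy M (exp 1) (count_space UNIV) (count_space UNIV) X Z = ln (real K)"
    and "prob_space.conditional_mutual_information M (exp 1) (count_space UNIV) (count_space UNIV) (count_space UNIV) X Y Z = 0"
proof -
  interpret prob_space M by (rule P)
  interpret information_space M "exp 1" by standard simp
  define A where "A = (\<lambda>g. f g ` {1..K})"
  have Ane: "A g \<noteq> {}" "finite (A g)" for g using K unfolding A_def by auto
  have cardA: "card (A g) = K" if "g \<in> set_pmf Pg" for g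
    unfolding A_def using card_image[OF inj[OF that]] by simp
  let ?U = "pmf_of_set {1..K}"
  have U2: "pmf_of_set ({1..K} \<times> {1..K}) = pair_pmf ?U ?U" using K by (intro pmf_of_set_times) auto
  define Q where "Q = map_pmf (\<lambda>(g, (v, v')). (f g v, f g v', g)) (pair_pmf Pg (pmf_of_set ({1..K} \<times> {1..K})))"
  define QXZ where "QXZ = map_pmf (\<lambda>(x, y, z). (x, z)) Q"
  define QYZ where "QYZ = map_pmf (\<lambda>(x, y, z). (y, z)) Q"
  define QX where "QX = map_pmf (\<lambda>(x, y, z). x) Q"
  have QZ: "map_pmf (\<lambda>(x, y, z). z) Q = Pg"
    unfolding Q_def by (simp add: map_pmf_comp case_prod_unfold map_fst_pair_pmf)
  have Qb: "Q = bind_pmf Pg (\<lambda>g. pmf_of_set (A g \<times> A g \<times> {g}))"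
    unfolding Q_def map_pair_bind
  proof (rule bind_pmf_cong[OF refl])
    fix g assume g: "g \<in> set_pmf Pg"
    have ig: "inj_on (f g) {1..K}" by (rule inj[OF g])
    have i2: "inj_on (\<lambda>(v, v'). (f g v, f g v', g)) ({1..K} \<times> {1..K})"
    proof (rule inj_onI)
      fix p q assume p: "p \<in> {1..K} \<times> {1..K}" and q: "q \<in> {1..K} \<times> {1..K}"
        and e: "(case p of (v, v') \<Rightarrow> (f g v, f g v', g)) = (case q of (v, v') \<Rightarrow> (f g v, f g v', g))"
      obtain a b where pab: "p = (a, b)" by (cases p)
      obtain c d where qcd: "q = (c, d)" by (cases q)
      have "f g a = f g c" "f g b = f g d" using e unfolding pab qcd by simp_all
      then have "a = c" "b = d" using inj_onD[OF ig] p q unfolding pab qcd by auto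
      then show "p = q" unfolding pab qcd by simp
    qed
    have im: "(\<lambda>(v, v'). (f g v, f g v', g)) ` ({1..K} \<times> {1..K}) = A g \<times> A g \<times> {g}"
    proof
      show "(\<lambda>(v, v'). (f g v, f g v', g)) ` ({1..K} \<times> {1..K}) \<subseteq> A g \<times> A g \<times> {g}"
        unfolding A_def by (rule image_subsetI) (auto simp: case_prod_unfold)
      show "A g \<times> A g \<times> {g} \<subseteq> (\<lambda>(v, v'). (f g v, f g v', g)) ` ({1..K} \<times> {1..K})"
      proof
        fix w assume "w \<in> A g \<times> A g \<times> {g}"
        then obtain v v' where vv: "v \<in> {1..K}" "v' \<in> {1..K}" "w = (f g v, f g v', g)" unfolding A_def by blast
        then show "w \<in> (\<lambda>(v, v'). (f g v, f g v', g)) ` ({1..K} \<times> {1..K})"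
          by (intro image_eqI[of _ _ "(v, v')"]) auto
      qed
    qed
    have "map_pmf (\<lambda>(v, v'). (f g v, f g v', g)) (pmf_of_set ({1..K} \<times> {1..K})) = pmf_of_set (A g \<times> A g \<times> {g})"
    proof -
      have "map_pmf (\<lambda>(v, v'). (f g v, f g v', g)) (pmf_of_set ({1..K} \<times> {1..K})) = pmf_of_set ((\<lambda>(v, v'). (f g v, f g v', g)) ` ({1..K} \<times> {1..K}))"
        by (rule map_pmf_of_set_inj[OF i2]) (use K in auto)
      then show ?thesis by (simp only: im)
    qed
    then show "map_pmf (\<lambda>w. case (g, w) of (g, v, v') \<Rightarrow> (f g v, f g v', g)) (pmf_of_set ({1..K} \<times> {1..K}))
        = pmf_of_set (A g \<times> A g \<times> {g})"
      by (simp add: case_prod_unfold)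
  qed
  have QXZb: "QXZ = bind_pmf Pg (\<lambda>g. pmf_of_set (A g \<times> {g}))"
  proof -
    have "QXZ = map_pmf (\<lambda>(g, (v, v')). (f g v, g)) (pair_pmf Pg (pmf_of_set ({1..K} \<times> {1..K})))"
      unfolding QXZ_def Q_def by (simp add: map_pmf_comp case_prod_unfold)
    also have "\<dots> = bind_pmf Pg (\<lambda>g. map_pmf (\<lambda>v. (f g v, g)) ?U)"
      unfolding U2 by (rule map_pair_fst2)
    also have "\<dots> = bind_pmf Pg (\<lambda>g. pmf_of_set (A g \<times> {g}))"
    proof (rule bind_pmf_cong[OF refl])
      fix g assume g: "g \<in> set_pmf Pg"
      have i1: "inj_on (\<lambda>v. (f g v, g)) {1..K}" using inj_onD[OF inj[OF g]] by (intro inj_onI) simp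
      have im: "(\<lambda>v. (f g v, g)) ` {1..K} = A g \<times> {g}" unfolding A_def by blast
      show "map_pmf (\<lambda>v. (f g v, g)) ?U = pmf_of_set (A g \<times> {g})"
      proof -
        have "map_pmf (\<lambda>v. (f g v, g)) ?U = pmf_of_set ((\<lambda>v. (f g v, g)) ` {1..K})"
          by (rule map_pmf_of_set_inj[OF i1]) (use K in auto)
        then show ?thesis by (simp only: im)
      qed
    qed
    finally show ?thesis .
  qed
  have QYZb: "QYZ = bind_pmf Pg (\<lambda>g. pmf_of_set (A g \<times> {g}))"
  proof -
    have "QYZ = map_pmf (\<lambda>(g, (v, v')). (f g v', g)) (pair_pmf Pg (pmf_of_set ({1..K} \<times> {1..K})))"
      unfolding QYZ_def Q_def by (simp add: map_pmf_comp case_prod_unfold)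
    also have "\<dots> = bind_pmf Pg (\<lambda>g. map_pmf (\<lambda>v. (f g v, g)) ?U)"
      unfolding U2 by (rule map_pair_snd2)
    also have "\<dots> = bind_pmf Pg (\<lambda>g. pmf_of_set (A g \<times> {g}))"
    proof (rule bind_pmf_cong[OF refl])
      fix g assume g: "g \<in> set_pmf Pg"
      have i1: "inj_on (\<lambda>v. (f g v, g)) {1..K}" using inj_onD[OF inj[OF g]] by (intro inj_onI) simp
      have im: "(\<lambda>v. (f g v, g)) ` {1..K} = A g \<times> {g}" unfolding A_def by blast
      show "map_pmf (\<lambda>v. (f g v, g)) ?U = pmf_of_set (A g \<times> {g})"
      proof -
        have "map_pmf (\<lambda>v. (f g v, g)) ?U = pmf_of_set ((\<lambda>v. (f g v, g)) ` {1..K})"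
          by (rule map_pmf_of_set_inj[OF i1]) (use K in auto)
        then show ?thesis by (simp only: im)
      qed
    qed
    finally show ?thesis .
  qed
  have pQ: "pmf Q (x, y, z) = pmf Pg z * indicator (A z \<times> A z \<times> {z}) (x, y, z) / card (A z \<times> A z \<times> {z})" for x y z
    unfolding Qb using Ane by (subst pmf_bind_single[of z]) (auto simp: indicator_def)
  have pXZ: "pmf QXZ (x, z) = pmf Pg z * indicator (A z \<times> {z}) (x, z) / card (A z \<times> {z})" for x z
    unfolding QXZb using Ane by (subst pmf_bind_single[of z]) (auto simp: indicator_def)
  have pYZ: "pmf QYZ (y, z) = pmf Pg z * indicator (A z \<times> {z}) (y, z) / card (A z \<times> {z})" for y z
    unfolding QYZb using Ane by (subst pmf_bind_single[of z]) (auto simp: indicator_def)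
  have sfx: "sigma_finite_measure (count_space (UNIV::'x set))" by (rule sigma_finite_measure_count_space)
  have sfz: "sigma_finite_measure (count_space (UNIV::'z set))" by (rule sigma_finite_measure_count_space)
  have D': "distr M (count_space UNIV) (\<lambda>\<omega>. (X \<omega>, Y \<omega>, Z \<omega>)) = measure_pmf Q" using D unfolding Q_def .
  have dZ: "distributed M (count_space UNIV) Z (\<lambda>z. ennreal (pmf Pg z))"
    using distr_pmf_comp[OF meas D', of "\<lambda>(x, y, z). z"] QZ by simp
  have dXZ: "distributed M (count_space UNIV \<Otimes>\<^sub>M count_space UNIV) (\<lambda>\<omega>. (X \<omega>, Z \<omega>)) (\<lambda>w. ennreal (pmf QXZ w))"
    unfolding cs_pair using distr_pmf_comp[OF meas D', of "\<lambda>(x, y, z). (x, z)"] unfolding QXZ_def by simp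
  have nz: "z \<in> set_pmf Pg" if "pmf Pg z \<noteq> 0" for z using that by (simp add: set_pmf_iff)
  have lnK: "log (exp 1) (1 / real K) = - ln (real K)" using K by (simp add: log_def ln_div)
  have pw: "pmf QXZ (x, z) * log (exp 1) (pmf QXZ (x, z) / pmf Pg z) = pmf QXZ (x, z) * (- ln (real K))" for x z
  proof (cases "pmf QXZ (x, z) = 0")
    case True then show ?thesis by simp
  next
    case False
    then have z: "pmf Pg z \<noteq> 0" and x: "x \<in> A z" unfolding pXZ by (auto simp: indicator_def split: if_splits)
    have c: "card (A z \<times> {z}) = K" using cardA[OF nz[OF z]] by (simp add: card_cartesian_product)
    have "pmf QXZ (x, z) / pmf Pg z = 1 / real K" unfolding pXZ c using z x by (simp add: indicator_def)
    then show ?thesis using lnK by simp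
  qed
  have "conditional_entropy (exp 1) (count_space UNIV) (count_space UNIV) X Z
      = - (\<integral>(x, z). pmf QXZ (x, z) * log (exp 1) (pmf QXZ (x, z) / pmf Pg z) \<partial>(count_space UNIV \<Otimes>\<^sub>M count_space UNIV))"
    by (rule conditional_entropy_generic_eq[OF sfx sfz dZ _ dXZ]) auto
  also have "(\<lambda>(x, z). pmf QXZ (x, z) * log (exp 1) (pmf QXZ (x, z) / pmf Pg z)) = (\<lambda>w. pmf QXZ w * (- ln (real K)))"
    by (auto simp: pw)
  also have "(\<integral>w. pmf QXZ w * (- ln (real K)) \<partial>(count_space UNIV \<Otimes>\<^sub>M count_space UNIV)) = - ln (real K)"
    unfolding cs_pair by (simp add: integral_pmf)
  finally show "conditional_entropy (exp 1) (count_space UNIV) (count_space UNIV) X Z = ln (real K)" by simp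
  have dX: "distributed M (count_space UNIV) X (\<lambda>x. ennreal (pmf QX x))"
    using distr_pmf_comp[OF meas D', of "\<lambda>(x, y, z). x"] unfolding QX_def by simp
  have dYZ: "distributed M (count_space UNIV \<Otimes>\<^sub>M count_space UNIV) (\<lambda>\<omega>. (Y \<omega>, Z \<omega>)) (\<lambda>w. ennreal (pmf QYZ w))"
    unfolding cs_pair using distr_pmf_comp[OF meas D', of "\<lambda>(x, y, z). (y, z)"] unfolding QYZ_def by simp
  have dXYZ: "distributed M (count_space UNIV \<Otimes>\<^sub>M count_space UNIV \<Otimes>\<^sub>M count_space UNIV) (\<lambda>\<omega>. (X \<omega>, Y \<omega>, Z \<omega>)) (\<lambda>w. ennreal (pmf Q w))"
    unfolding cs_pair using distr_pmf_comp[OF meas D', of "\<lambda>w. w"] by simp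
  have finQ: "finite (set_pmf Q)" unfolding Q_def using fin K by simp
  have fsupp: "finite {w. F w \<noteq> (0::real)}" if "\<And>w. pmf Q w = 0 \<Longrightarrow> F w = 0" for F
    using that by (intro finite_subset[OF _ finQ]) (auto simp: set_pmf_iff)
  have I1: "integrable (count_space UNIV \<Otimes>\<^sub>M count_space UNIV \<Otimes>\<^sub>M count_space UNIV)
      (\<lambda>(x, y, z). pmf Q (x, y, z) * log (exp 1) (pmf Q (x, y, z) / (pmf QX x * pmf QYZ (y, z))))"
    unfolding cs_pair by (rule integrable_finite_support, rule fsupp) auto
  have I2: "integrable (count_space UNIV \<Otimes>\<^sub>M count_space UNIV \<Otimes>\<^sub>M count_space UNIV)
      (\<lambda>(x, y, z). pmf Q (x, y, z) * log (exp 1) (pmf QXZ (x, z) / (pmf QX x * pmf Pg z)))"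
    unfolding cs_pair by (rule integrable_finite_support, rule fsupp) auto
  have pw2: "pmf Q (x, y, z) * log (exp 1) (pmf Q (x, y, z) / (pmf QXZ (x, z) * (pmf QYZ (y, z) / pmf Pg z))) = 0" for x y z
  proof (cases "pmf Q (x, y, z) = 0")
    case True then show ?thesis by simp
  next
    case False
    then have z: "pmf Pg z \<noteq> 0" and x: "x \<in> A z" and y: "y \<in> A z"
      unfolding pQ by (auto simp: indicator_def split: if_splits)
    have c: "card (A z \<times> {z}) = K" "card (A z \<times> A z \<times> {z}) = K * K"
      using cardA[OF nz[OF z]] by (simp_all add: card_cartesian_product)
    have r: "pmf Q (x, y, z) / (pmf QXZ (x, z) * (pmf QYZ (y, z) / pmf Pg z)) = 1"
      unfolding pQ pXZ pYZ c using z x y K by (simp add: indicator_def field_simps)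
    show ?thesis unfolding r by simp
  qed
  have "conditional_mutual_information (exp 1) (count_space UNIV) (count_space UNIV) (count_space UNIV) X Y Z
      = (\<integral>(x, y, z). pmf Q (x, y, z) * log (exp 1) (pmf Q (x, y, z) / (pmf QXZ (x, z) * (pmf QYZ (y, z) / pmf Pg z)))
          \<partial>(count_space UNIV \<Otimes>\<^sub>M count_space UNIV \<Otimes>\<^sub>M count_space UNIV))"
    by (rule conditional_mutual_information_generic_eq[OF sfx sfx sfz dX _ dZ _ dYZ _ dXZ _ dXYZ _ I1 I2]) auto
  also have "(\<lambda>(x, y, z). pmf Q (x, y, z) * log (exp 1) (pmf Q (x, y, z) / (pmf QXZ (x, z) * (pmf QYZ (y, z) / pmf Pg z)))) = (\<lambda>_. 0)"
  proof (intro ext)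
    fix w :: "'x \<times> 'x \<times> 'z"
    obtain x y z where w: "w = (x, y, z)" by (cases w) auto
    show "(case w of (x, y, z) \<Rightarrow> pmf Q (x, y, z) * log (exp 1) (pmf Q (x, y, z) / (pmf QXZ (x, z) * (pmf QYZ (y, z) / pmf Pg z)))) = 0"
      unfolding w prod.case by (rule pw2)
  qed
  also have "(\<integral>_. (0::real) \<partial>(count_space UNIV \<Otimes>\<^sub>M count_space UNIV \<Otimes>\<^sub>M count_space UNIV)) = 0" by simp
  finally show "conditional_mutual_information (exp 1) (count_space UNIV) (count_space UNIV) (count_space UNIV) X Y Z = 0" .
qed

lemma step2:
  assumes "\<And>s e c c'. s \<in> set_pmf A \<Longrightarrow> F (s @ [e], (c, c')) = \<Psi> s (c, h e c')"
  shows "map_pmf F (pair_pmf (map_pmf (\<lambda>(s, e). s @ [e]) (pair_pmf A B)) (pair_pmf C D))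
       = map_pmf (\<lambda>(s, z). \<Psi> s z) (pair_pmf A (pair_pmf C (map_pmf (\<lambda>(e, c'). h e c') (pair_pmf B D))))"
proof -
  have L: "map_pmf F (pair_pmf (map_pmf (\<lambda>(s, e). s @ [e]) (pair_pmf A B)) (pair_pmf C D))
     = bind_pmf A (\<lambda>s. bind_pmf B (\<lambda>e. bind_pmf C (\<lambda>c. bind_pmf D (\<lambda>c'. return_pmf (F (s @ [e], (c, c')))))))"
    by (simp add: pair_pmf_def map_pmf_def bind_assoc_pmf bind_return_pmf)
  have R: "map_pmf (\<lambda>(s, z). \<Psi> s z) (pair_pmf A (pair_pmf C (map_pmf (\<lambda>(e, c'). h e c') (pair_pmf B D))))
     = bind_pmf A (\<lambda>s. bind_pmf C (\<lambda>c. bind_pmf B (\<lambda>e. bind_pmf D (\<lambda>c'. return_pmf (\<Psi> s (c, h e c'))))))"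
    by (simp add: pair_pmf_def map_pmf_def bind_assoc_pmf bind_return_pmf)
  show ?thesis unfolding L R
  proof (rule bind_pmf_cong[OF refl])
    fix s assume s: "s \<in> set_pmf A"
    have "bind_pmf B (\<lambda>e. bind_pmf C (\<lambda>c. bind_pmf D (\<lambda>c'. return_pmf (F (s @ [e], (c, c'))))))
      = bind_pmf B (\<lambda>e. bind_pmf C (\<lambda>c. bind_pmf D (\<lambda>c'. return_pmf (\<Psi> s (c, h e c')))))"
      using assms[OF s] by simp
    also have "\<dots> = bind_pmf C (\<lambda>c. bind_pmf B (\<lambda>e. bind_pmf D (\<lambda>c'. return_pmf (\<Psi> s (c, h e c')))))"
      by (rule bind_commute_pmf)
    finally show "bind_pmf B (\<lambda>e. bind_pmf C (\<lambda>c. bind_pmf D (\<lambda>c'. return_pmf (F (s @ [e], (c, c'))))))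
      = bind_pmf C (\<lambda>c. bind_pmf B (\<lambda>e. bind_pmf D (\<lambda>c'. return_pmf (\<Psi> s (c, h e c')))))" .
  qed
qed

lemma map_fst_inner: "map_pmf (\<lambda>(s, z). \<Psi> s (fst z)) (pair_pmf A (pair_pmf C W)) = map_pmf (\<lambda>(s, c). \<Psi> s c) (pair_pmf A C)"
proof -
  have "map_pmf (\<lambda>(s, z). \<Psi> s (fst z)) (pair_pmf A (pair_pmf C W)) = map_pmf (\<lambda>(s, c). \<Psi> s c) (map_pmf (apsnd fst) (pair_pmf A (pair_pmf C W)))"
    by (simp add: map_pmf_comp case_prod_unfold)
  also have "map_pmf (apsnd fst) (pair_pmf A (pair_pmf C W)) = pair_pmf A C"
    by (simp add: pair_map_pmf2[symmetric] map_fst_pair_pmf)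
  finally show ?thesis .
qed

context kseq begin

lemma coreA:
  assumes t: "Suc t < 2 ^ d"
  shows "map_pmf (\<lambda>(s, (c, c')). (dsc s d t c, dsc s d (Suc t) c)) (pair_pmf (Ed k n (Suc d)) (pair_pmf (Cq k (n + d)) (Cq k (Suc (n + d))))) = U2q k n"
proof -
  have "map_pmf (\<lambda>(s, (c, c')). (dsc s d t c, dsc s d (Suc t) c)) (pair_pmf (Ed k n (Suc d)) (pair_pmf (Cq k (n + d)) (Cq k (Suc (n + d)))))
    = map_pmf (\<lambda>(s, z). (\<lambda>s c. (dsc s d t c, dsc s d (Suc t) c)) s (fst z))
        (pair_pmf (Ed k n d) (pair_pmf (Cq k (n + d)) (map_pmf (\<lambda>(e, c'). c') (pair_pmf (Eq k (Suc (n + d))) (Cq k (Suc (n + d)))))))"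
    unfolding Ed_Suc by (rule step2) (auto dest: set_Ed simp: dsc_append[where r="[_]", simplified])
  also have "\<dots> = map_pmf (\<lambda>(s, c). (dsc s d t c, dsc s d (Suc t) c)) (pair_pmf (Ed k n d) (Cq k (n + d)))"
    by (rule map_fst_inner)
  also have "\<dots> = U2q k n" using core[of d n] t by blast
  finally show ?thesis .
qed

lemma coreB:
  "map_pmf (\<lambda>(s, (c, c')). (dsc s d (2 ^ d - 1) c, dsc s (Suc d) 0 c')) (pair_pmf (Ed k n (Suc d)) (pair_pmf (Cq k (n + d)) (Cq k (Suc (n + d))))) = U2q k n"
proof -
  have "map_pmf (\<lambda>(s, (c, c')). (dsc s d (2 ^ d - 1) c, dsc s (Suc d) 0 c')) (pair_pmf (Ed k n (Suc d)) (pair_pmf (Cq k (n + d)) (Cq k (Suc (n + d)))))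
    = map_pmf (\<lambda>(s, z). (case z of (a, b) \<Rightarrow> (dsc s d (2 ^ d - 1) a, dsc s d 0 b)))
        (pair_pmf (Ed k n d) (pair_pmf (Cq k (n + d)) (map_pmf (\<lambda>(e, c'). fst (e ! (c' - 1))) (pair_pmf (Eq k (Suc (n + d))) (Cq k (Suc (n + d)))))))"
    unfolding Ed_Suc by (rule step2) (auto dest: set_Ed simp del: dsc.simps(2) simp: dsc_snoc dsc_append[where r="[_]", simplified])
  also have "\<dots> = map_pmf (\<lambda>(s, z). (case z of (a, b) \<Rightarrow> (dsc s d (2 ^ d - 1) a, dsc s d 0 b))) (pair_pmf (Ed k n d) (U2q k (n + d)))"
    by (simp only: child_fst U2q_pair)
  also have "\<dots> = U2q k n" using core[of d n] by (simp add: case_prod_unfold)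
  finally show ?thesis .
qed

lemma assembly:
  assumes V: "map_pmf (\<lambda>(s, cc). V s cc) (pair_pmf (Ed k n (Suc d)) CC) = U2q k n"
  shows "map_pmf (\<lambda>(es, cc). (rY es n (fst (V (drop n es) cc)), rY es n (snd (V (drop n es) cc)), take n es))
      (pair_pmf (Plist (map (Eq k) [1..<Suc (n + Suc d)])) CC)
    = map_pmf (\<lambda>(g, (v, v')). (rY g n v, rY g n v', g)) (pair_pmf (Plist (map (Eq k) [1..<Suc n])) (pmf_of_set ({1..k n} \<times> {1..k n})))"
proof -
  let ?Pg = "Plist (map (Eq k) [1..<Suc n])"
  have lg: "length g = n" if "g \<in> set_pmf ?Pg" for g using set_Plist[OF that] by simp
  have sp: "[1..<Suc (n + Suc d)] = [1..<Suc n] @ [Suc n..<Suc (n + Suc d)]"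
  proof -
    have "Suc (n + Suc d) = Suc n + Suc d" by simp
    then show ?thesis by (simp only:) (rule upt_add_eq_append, simp)
  qed
  have "Plist (map (Eq k) [1..<Suc (n + Suc d)]) = map_pmf (\<lambda>(a, b). a @ b) (pair_pmf ?Pg (Ed k n (Suc d)))"
    unfolding sp map_append Plist_append Ed_def ..
  then have "map_pmf (\<lambda>(es, cc). (rY es n (fst (V (drop n es) cc)), rY es n (snd (V (drop n es) cc)), take n es))
      (pair_pmf (Plist (map (Eq k) [1..<Suc (n + Suc d)])) CC)
    = map_pmf (\<lambda>(g, s, cc). (rY (g @ s) n (fst (V (drop n (g @ s)) cc)), rY (g @ s) n (snd (V (drop n (g @ s)) cc)), take n (g @ s)))
        (pair_pmf ?Pg (pair_pmf (Ed k n (Suc d)) CC))"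
    by (simp add: pair_map_pmf1 pair_pair_pmf map_pmf_comp case_prod_unfold)
  also have "\<dots> = map_pmf (\<lambda>(g, w). (rY g n (fst w), rY g n (snd w), g)) (pair_pmf ?Pg (map_pmf (\<lambda>(s, cc). V s cc) (pair_pmf (Ed k n (Suc d)) CC)))"
    unfolding pair_map_pmf2 map_pmf_comp
  proof (rule map_pmf_cong[OF refl])
    fix x assume "x \<in> set_pmf (pair_pmf ?Pg (pair_pmf (Ed k n (Suc d)) CC))"
    then obtain g s cc where x: "x = (g, s, cc)" and g: "length g = n" using lg by auto
    have "rY (g @ s) n = rY g n" using g by (intro ext rY_cong) (simp add: nth_append)
    then show "(case x of (g, s, cc) \<Rightarrow> (rY (g @ s) n (fst (V (drop n (g @ s)) cc)), rY (g @ s) n (snd (V (drop n (g @ s)) cc)), take n (g @ s)))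
        = (case apsnd (\<lambda>(s, cc). V s cc) x of (g, w) \<Rightarrow> (rY g n (fst w), rY g n (snd w), g))"
      unfolding x using g by simp
  qed
  also have "\<dots> = map_pmf (\<lambda>(g, (v, v')). (rY g n v, rY g n v', g)) (pair_pmf ?Pg (pmf_of_set ({1..k n} \<times> {1..k n})))"
    unfolding V U2q_def by (simp add: case_prod_unfold)
  finally show ?thesis .
qed

end

lemma distr_comp_pmf:
  assumes T: "T \<in> measurable M (count_space UNIV)"
    and D: "distr M (count_space UNIV) T = measure_pmf Q"
  shows "distr M (count_space UNIV) (\<lambda>\<omega>. h (T \<omega>)) = measure_pmf (map_pmf h Q)"
proof -
  have h: "h \<in> measurable (count_space UNIV) (count_space UNIV)" by simp
  have "distr M (count_space UNIV) (\<lambda>\<omega>. h (T \<omega>)) = distr (distr M (count_space UNIV) T) (count_space UNIV) h"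
    using distr_distr[OF h T] by (simp add: comp_def)
  also have "\<dots> = measure_pmf (map_pmf h Q)" unfolding D by (simp add: map_pmf_rep_eq)
  finally show ?thesis .
qed

context kseq begin

lemma subsets_ne: "finite (rha_subsets (k l) (k (Suc l)))" "rha_subsets (k l) (k (Suc l)) \<noteq> {}"
  using rha_subsets_facts[OF kpos kup] by auto

lemma set_Eq: "e \<in> set_pmf (Eq k (Suc l)) \<Longrightarrow> \<exists>A. A \<in> rha_subsets (k l) (k (Suc l)) \<and> e = lex_enum A"
  unfolding Eq_def using subsets_ne by auto

lemma finite_Eq: "finite (set_pmf (Eq k (Suc l)))"
  unfolding Eq_def using subsets_ne by auto

lemma finite_Pg: "finite (set_pmf (Plist (map (Eq k) [1..<Suc n])))"
proof -
  let ?B = "\<Union>i<n. set_pmf (Eq k (Suc i))"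
  have "set_pmf (Plist (map (Eq k) [1..<Suc n])) \<subseteq> {xs. set xs \<subseteq> ?B \<and> length xs \<le> n}"
  proof
    fix g assume g: "g \<in> set_pmf (Plist (map (Eq k) [1..<Suc n]))"
    then have "length g = n" "\<And>i. i < n \<Longrightarrow> g ! i \<in> set_pmf (Eq k (Suc i))"
      using set_Plist[OF g] by (auto simp del: upt_Suc)
    then show "g \<in> {xs. set xs \<subseteq> ?B \<and> length xs \<le> n}" by (auto simp: in_set_conv_nth) blast
  qed
  moreover have "finite {xs. set xs \<subseteq> ?B \<and> length xs \<le> n}"
    by (rule finite_lists_length_le) (auto intro: finite_Eq)
  ultimately show ?thesis by (rule finite_subset)
qed

lemma rY_inj:
  assumes g: "g \<in> set_pmf (Plist (map (Eq k) [1..<Suc n]))"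
  shows "n' \<le> n \<Longrightarrow> inj_on (rY g n') {1..k n'}"
proof (induction n')
  case 0 then show ?case by (auto simp: inj_on_def)
next
  case (Suc n')
  have gl: "g ! n' \<in> set_pmf (Eq k (Suc n'))" using set_Plist[OF g] Suc.prems by (auto simp del: upt_Suc)
  then obtain A where A: "A \<in> rha_subsets (k n') (k (Suc n'))" "g ! n' = lex_enum A" using set_Eq by blast
  have Af: "finite A" "card A = k (Suc n')" "A \<subseteq> {1..k n'} \<times> {1..k n'}"
    using rha_subsets_facts(3)[OF kpos kup A(1)] by auto
  have IH: "inj_on (rY g n') {1..k n'}" using Suc by simp
  have inA: "g ! n' ! (c - 1) \<in> A" if "c \<in> {1..k (Suc n')}" for c
  proof -
    have "c - 1 < length (lex_enum A)" using that lex_enum_length[OF Af(1)] Af(2) by auto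
    then show ?thesis using A(2) lex_enum(2)[OF Af(1)] nth_mem by metis
  qed
  show ?case
  proof (rule inj_onI)
    fix c c' assume c: "c \<in> {1..k (Suc n')}" and c': "c' \<in> {1..k (Suc n')}" and e: "rY g (Suc n') c = rY g (Suc n') c'"
    obtain a b where ab: "g ! n' ! (c - 1) = (a, b)" by (cases "g ! n' ! (c - 1)")
    obtain a' b' where ab': "g ! n' ! (c' - 1) = (a', b')" by (cases "g ! n' ! (c' - 1)")
    have r: "rY g n' a @ rY g n' b = rY g n' a' @ rY g n' b'" using e ab ab' by simp
    then have "rY g n' a = rY g n' a'" "rY g n' b = rY g n' b'" by (simp_all add: append_eq_append_conv)
    moreover have "a \<in> {1..k n'}" "b \<in> {1..k n'}" "a' \<in> {1..k n'}" "b' \<in> {1..k n'}"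
      using inA[OF c] inA[OF c'] ab ab' Af(3) by auto
    ultimately have "a = a'" "b = b'" using IH by (auto dest: inj_onD)
    then have "lex_enum A ! (c - 1) = lex_enum A ! (c' - 1)" using ab ab' A(2) by simp
    moreover have "c - 1 < length (lex_enum A)" "c' - 1 < length (lex_enum A)"
      using c c' lex_enum_length[OF Af(1)] Af(2) by auto
    ultimately have "c - 1 = c' - 1" using lex_enum_distinct[OF Af(1)] nth_eq_iff_index_eq by blast
    then show "c = c'" using c c' by auto
  qed
qed

end

lemma ES_eq: "ES S N \<omega> = es \<longleftrightarrow> length es = N \<and> (\<forall>i<N. lex_enum (S (Suc i) \<omega>) = es ! i)"
  unfolding ES_def by (auto simp: list_eq_iff_nth_eq simp del: upt_Suc)

lemma transfer:
  fixes M :: "'a measure" and k :: "nat \<Rightarrow> nat" and S :: "nat \<Rightarrow> 'a \<Rightarrow> (nat \<times> nat) set" and C :: "nat \<Rightarrow> 'a \<Rightarrow> nat"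
    and N m :: nat
  assumes P: "prob_space M"
    and S_rv: "\<And>n. n \<ge> 1 \<Longrightarrow> S n \<in> measurable M (count_space UNIV)"
    and S_distr: "\<And>n. n \<ge> 1 \<Longrightarrow>
       distr M (count_space UNIV) (S n) = measure_pmf (pmf_of_set (rha_subsets (k (n - 1)) (k n)))"
    and C_rv: "\<And>n. C n \<in> measurable M (count_space UNIV)"
    and C_distr: "\<And>n. distr M (count_space UNIV) (C n) = measure_pmf (pmf_of_set {1..k n})"
    and indep: "prob_space.indep_vars M (\<lambda>_. count_space UNIV) (rha_vars S C)
                  (Inl ` {1..} \<union> range Inr)"
  shows "(\<lambda>\<omega>. (ES S N \<omega>, C m \<omega>, C (Suc m) \<omega>)) \<in> measurable M (count_space UNIV)"
    and "distr M (count_space UNIV) (\<lambda>\<omega>. (ES S N \<omega>, C m \<omega>, C (Suc m) \<omega>))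
       = measure_pmf (pair_pmf (Plist (map (Eq k) [1..<Suc N])) (pair_pmf (Cq k m) (Cq k (Suc m))))"
proof -
  interpret prob_space M by (rule P)
  define T where "T = (\<lambda>\<omega>. (ES S N \<omega>, C m \<omega>, C (Suc m) \<omega>))"
  define J :: "(nat + nat) set" where "J = (\<lambda>i. Inl (Suc i)) ` {..<N} \<union> {Inr m, Inr (Suc m)}"
  define Av where "Av = (\<lambda>(es :: (nat \<times> nat) list list) (c :: nat) (c' :: nat) (i :: nat + nat). case i of
      Inl l \<Rightarrow> Inl ` {B. lex_enum B = es ! (l - 1)} | Inr r \<Rightarrow> (Inr ` {if r = m then c else c'} :: ((nat \<times> nat) set + nat) set))"
  have JI: "J \<subseteq> Inl ` {1..} \<union> range Inr" unfolding J_def by auto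
  have Jf: "finite J" "J \<noteq> {}" unfolding J_def by auto
  have rvL: "rha_vars S C (Inl l) = (\<lambda>\<omega>. Inl (S l \<omega>))" for l by (rule ext) (simp add: rha_vars_def)
  have rvR: "rha_vars S C (Inr r) = (\<lambda>\<omega>. Inr (C r \<omega>))" for r by (rule ext) (simp add: rha_vars_def)
  have rv: "rha_vars S C i \<in> measurable M (count_space UNIV)" if "i \<in> J" for i
  proof (cases i)
    case (Inl l)
    then have "l \<ge> 1" using that unfolding J_def by auto
    then have "(\<lambda>\<omega>. Inl (S l \<omega>)) \<in> measurable M (count_space UNIV)" by (intro measurable_compose[OF S_rv]) simp_all
    then show ?thesis unfolding Inl rvL .
  next
    case (Inr r)
    have "(\<lambda>\<omega>. Inr (C r \<omega>)) \<in> measurable M (count_space UNIV)" by (intro measurable_compose[OF C_rv]) simp_all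
    then show ?thesis unfolding Inr rvR .
  qed
  have pre: "T -` {(es, c, c')} \<inter> space M = (if length es = N then (\<Inter>i\<in>J. rha_vars S C i -` Av es c c' i \<inter> space M) else {})"
    for es c c'
  proof (cases "length es = N")
    case False
    then show ?thesis unfolding T_def by (auto simp: ES_eq)
  next
    case True
    have "T -` {(es, c, c')} \<inter> space M = {\<omega> \<in> space M. (\<forall>i<N. lex_enum (S (Suc i) \<omega>) = es ! i) \<and> C m \<omega> = c \<and> C (Suc m) \<omega> = c'}"
      unfolding T_def using True by (auto simp: ES_eq)
    also have "\<dots> = (\<Inter>i\<in>J. rha_vars S C i -` Av es c c' i \<inter> space M)"
      unfolding J_def Av_def by (auto simp: rvL rvR)
    finally show ?thesis using True by simp
  qed
  have Tm: "T \<in> measurable M (count_space UNIV)"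
    unfolding measurable_count_space_eq2_countable
  proof (intro conjI ballI)
    show "T \<in> space M \<rightarrow> UNIV" by simp
    fix a :: "(nat \<times> nat) list list \<times> nat \<times> nat"
    obtain es c c' where a: "a = (es, c, c')" by (cases a) auto
    have "(\<Inter>i\<in>J. rha_vars S C i -` Av es c c' i \<inter> space M) \<in> sets M"
      using Jf by (intro sets.finite_INT measurable_sets[OF rv]) auto
    then show "T -` {a} \<inter> space M \<in> sets M" unfolding a pre by simp
  qed
  then show "(\<lambda>\<omega>. (ES S N \<omega>, C m \<omega>, C (Suc m) \<omega>)) \<in> measurable M (count_space UNIV)" unfolding T_def .
  have factL: "prob (rha_vars S C (Inl (Suc i)) -` Av es c c' (Inl (Suc i)) \<inter> space M) = pmf (Eq k (Suc i)) (es ! i)" for es c c' i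
  proof -
    have "rha_vars S C (Inl (Suc i)) -` Av es c c' (Inl (Suc i)) \<inter> space M = S (Suc i) -` {B. lex_enum B = es ! i} \<inter> space M"
      unfolding Av_def rvL by auto
    also have "prob \<dots> = measure (distr M (count_space UNIV) (S (Suc i))) {B. lex_enum B = es ! i}"
      using S_rv[of "Suc i"] by (simp add: measure_distr)
    also have "\<dots> = pmf (Eq k (Suc i)) (es ! i)" unfolding S_distr[of "Suc i", simplified] Eq_def pmf_map
      by (simp add: vimage_def)
    finally show ?thesis .
  qed
  have factR: "prob (rha_vars S C (Inr r) -` Av es c c' (Inr r) \<inter> space M) = pmf (Cq k r) (if r = m then c else c')" for es c c' r
  proof -
    have "rha_vars S C (Inr r) -` Av es c c' (Inr r) \<inter> space M = C r -` {if r = m then c else c'} \<inter> space M"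
      unfolding Av_def rvR by auto
    also have "prob \<dots> = measure (distr M (count_space UNIV) (C r)) {if r = m then c else c'}"
      using C_rv[of r] by (simp add: measure_distr)
    also have "\<dots> = pmf (Cq k r) (if r = m then c else c')" unfolding C_distr Cq_def by (simp add: measure_pmf_single)
    finally show ?thesis .
  qed
  let ?Pi = "pair_pmf (Plist (map (Eq k) [1..<Suc N])) (pair_pmf (Cq k m) (Cq k (Suc m)))"
  have probT: "prob (T -` {v} \<inter> space M) = pmf ?Pi v" for v
  proof -
    obtain es c c' where v: "v = (es, c, c')" by (cases v) auto
    show ?thesis
    proof (cases "length es = N")
      case False
      then show ?thesis unfolding v pre by (simp add: pmf_pair pmf_Plist del: upt_Suc)
    next
      case True
      have "prob (T -` {v} \<inter> space M) = prob (\<Inter>i\<in>J. rha_vars S C i -` Av es c c' i \<inter> space M)"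
        unfolding v pre using True by simp
      also have "\<dots> = (\<Prod>i\<in>J. prob (rha_vars S C i -` Av es c c' i \<inter> space M))"
        by (rule indep_varsD[OF indep]) (use Jf JI in auto)
      also have "\<dots> = (\<Prod>i\<in>(\<lambda>i. Inl (Suc i)) ` {..<N}. prob (rha_vars S C i -` Av es c c' i \<inter> space M))
          * (\<Prod>i\<in>{Inr m, Inr (Suc m)}. prob (rha_vars S C i -` Av es c c' i \<inter> space M))"
        unfolding J_def by (rule prod.union_disjoint) auto
      also have "(\<Prod>i\<in>(\<lambda>i. Inl (Suc i)) ` {..<N}. prob (rha_vars S C i -` Av es c c' i \<inter> space M))
          = (\<Prod>i<N. pmf (Eq k (Suc i)) (es ! i))"
        by (subst prod.reindex) (auto simp: inj_on_def factL)
      also have "(\<Prod>i\<in>{Inr m, Inr (Suc m)}. prob (rha_vars S C i -` Av es c c' i \<inter> space M))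
          = pmf (Cq k m) c * pmf (Cq k (Suc m)) c'"
        by (simp add: factR)
      also have "(\<Prod>i<N. pmf (Eq k (Suc i)) (es ! i)) = pmf (Plist (map (Eq k) [1..<Suc N])) es"
        using True by (simp add: pmf_Plist del: upt_Suc)
      finally show ?thesis unfolding v by (simp add: pmf_pair)
    qed
  qed
  have "distr M (count_space UNIV) T = measure_pmf ?Pi"
  proof (rule measure_eqI_countable)
    show "sets (distr M (count_space UNIV) T) = Pow UNIV" by simp
    show "sets (measure_pmf ?Pi) = Pow UNIV" by simp
    show "countable (UNIV :: ((nat \<times> nat) list list \<times> nat \<times> nat) set)" by simp
    fix v :: "(nat \<times> nat) list list \<times> nat \<times> nat"
    have "emeasure (distr M (count_space UNIV) T) {v} = emeasure M (T -` {v} \<inter> space M)"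
      using Tm by (simp add: emeasure_distr)
    also have "\<dots> = ennreal (pmf ?Pi v)" using probT[of v] by (simp add: emeasure_eq_measure)
    also have "\<dots> = emeasure (measure_pmf ?Pi) {v}" by (simp add: emeasure_pmf_single)
    finally show "emeasure (distr M (count_space UNIV) T) {v} = emeasure (measure_pmf ?Pi) {v}" .
  qed
  then show "distr M (count_space UNIV) (\<lambda>\<omega>. (ES S N \<omega>, C m \<omega>, C (Suc m) \<omega>)) = measure_pmf ?Pi" unfolding T_def .
qed

theorem proposition6:
  fixes M :: "'a measure"
    and k :: "nat \<Rightarrow> nat"
    and S :: "nat \<Rightarrow> 'a \<Rightarrow> (nat \<times> nat) set"
    and C :: "nat \<Rightarrow> 'a \<Rightarrow> nat"
  assumes P: "prob_space M"
    and k_pos: "\<And>n. 0 < k n"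
    and k_lower: "\<And>n. n \<ge> 1 \<Longrightarrow> k (n - 1) \<le> k n"
    and k_upper: "\<And>n. n \<ge> 1 \<Longrightarrow> k n \<le> (k (n - 1))\<^sup>2"
    and S_rv: "\<And>n. n \<ge> 1 \<Longrightarrow> S n \<in> measurable M (count_space UNIV)"
    and S_distr: "\<And>n. n \<ge> 1 \<Longrightarrow>
       distr M (count_space UNIV) (S n) = measure_pmf (pmf_of_set (rha_subsets (k (n - 1)) (k n)))"
    and C_rv: "\<And>n. C n \<in> measurable M (count_space UNIV)"
    and C_distr: "\<And>n. distr M (count_space UNIV) (C n) = measure_pmf (pmf_of_set {1..k n})"
    and indep: "prob_space.indep_vars M (\<lambda>_. count_space UNIV) (rha_vars S C)
                  (Inl ` {1..} \<union> range Inr)"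
  shows "\<forall>n j. j \<ge> 1 \<longrightarrow>
      prob_space.conditional_entropy M (exp 1) (count_space UNIV) (count_space UNIV)
        (rha_block S C n j) (rha_G S n) = ln (real (k n))
    \<and> prob_space.conditional_mutual_information M (exp 1)
        (count_space UNIV) (count_space UNIV) (count_space UNIV)
        (rha_block S C n j) (rha_block S C n (j + 1)) (rha_G S n) = 0"
proof (intro allI impI)
  fix n j :: nat assume j: "1 \<le> j"
  interpret kseq k
  proof
    show "\<And>l. 0 < k l" by (rule k_pos)
    fix l show "k (Suc l) \<le> (k l)\<^sup>2" using k_upper[of "Suc l"] by simp
  qed
  obtain d where d: "2 ^ d \<le> j" "j < 2 ^ Suc d" using ex_power_ivl1[of 2 j] j by auto
  define m where "m = n + d"
  define N where "N = Suc m"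
  define T where "T = (\<lambda>\<omega>. (ES S N \<omega>, C m \<omega>, C (Suc m) \<omega>))"
  note TR = transfer[OF P S_rv S_distr C_rv C_distr indep, of N m]
  have Tm: "T \<in> measurable M (count_space UNIV)" unfolding T_def by (rule TR(1))
  have TD: "distr M (count_space UNIV) T = measure_pmf (pair_pmf (Plist (map (Eq k) [1..<Suc (n + Suc d)])) (pair_pmf (Cq k (n + d)) (Cq k (Suc (n + d)))))"
    unfolding T_def using TR(2) by (simp add: N_def m_def del: upt_Suc)
  have G: "rha_G S n \<omega> = take n (ES S N \<omega>)" for \<omega>
    unfolding rha_G_def ES_def N_def m_def by (simp add: take_map del: upt_Suc)
  obtain V where V: "map_pmf (\<lambda>(s, cc). V s cc) (pair_pmf (Ed k n (Suc d)) (pair_pmf (Cq k (n + d)) (Cq k (Suc (n + d))))) = U2q k n"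
    and XV: "\<And>\<omega>. rha_block S C n j \<omega> = rY (ES S N \<omega>) n (fst (V (drop n (ES S N \<omega>)) (C m \<omega>, C (Suc m) \<omega>)))"
    and YV: "\<And>\<omega>. rha_block S C n (j + 1) \<omega> = rY (ES S N \<omega>) n (snd (V (drop n (ES S N \<omega>)) (C m \<omega>, C (Suc m) \<omega>)))"
  proof (cases "Suc j < 2 ^ Suc d")
    case True
    define t where "t = j - 2 ^ d"
    have t: "Suc t < 2 ^ d" using True d unfolding t_def by simp
    let ?V = "\<lambda>s (c::nat, c'::nat). (dsc s d t c, dsc s d (Suc t) c)"
    show ?thesis
    proof (rule that[of ?V])
      show "map_pmf (\<lambda>(s, cc). ?V s cc) (pair_pmf (Ed k n (Suc d)) (pair_pmf (Cq k (n + d)) (Cq k (Suc (n + d))))) = U2q k n"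
        using coreA[OF t] by (simp add: case_prod_unfold)
      fix \<omega>
      show "rha_block S C n j \<omega> = rY (ES S N \<omega>) n (fst (?V (drop n (ES S N \<omega>)) (C m \<omega>, C (Suc m) \<omega>)))"
        using rha_block_dsc[OF d, of n N S C \<omega>] unfolding t_def N_def m_def by simp
      have d1: "2 ^ d \<le> j + 1" "j + 1 < 2 ^ Suc d" using d True by simp_all
      have "j + 1 - 2 ^ d = Suc t" unfolding t_def using d by simp
      then show "rha_block S C n (j + 1) \<omega> = rY (ES S N \<omega>) n (snd (?V (drop n (ES S N \<omega>)) (C m \<omega>, C (Suc m) \<omega>)))"
        using rha_block_dsc[OF d1, of n N S C \<omega>] unfolding N_def m_def by simp
    qed
  next
    case False
    then have jj: "j + 1 = 2 ^ Suc d" using d by simp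
    have jt: "j - 2 ^ d = 2 ^ d - 1" using jj by simp
    let ?V = "\<lambda>s (c::nat, c'::nat). (dsc s d (2 ^ d - 1) c, dsc s (Suc d) 0 c')"
    show ?thesis
    proof (rule that[of ?V])
      show "map_pmf (\<lambda>(s, cc). ?V s cc) (pair_pmf (Ed k n (Suc d)) (pair_pmf (Cq k (n + d)) (Cq k (Suc (n + d))))) = U2q k n"
        using coreB[of d n] by (simp add: case_prod_unfold)
      fix \<omega>
      show "rha_block S C n j \<omega> = rY (ES S N \<omega>) n (fst (?V (drop n (ES S N \<omega>)) (C m \<omega>, C (Suc m) \<omega>)))"
        using rha_block_dsc[OF d, of n N S C \<omega>] unfolding jt N_def m_def by simp
      have d1: "2 ^ Suc d \<le> j + 1" "j + 1 < 2 ^ Suc (Suc d)" using jj by simp_all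
      show "rha_block S C n (j + 1) \<omega> = rY (ES S N \<omega>) n (snd (?V (drop n (ES S N \<omega>)) (C m \<omega>, C (Suc m) \<omega>)))"
        using rha_block_dsc[OF d1, of n N S C \<omega>] jj unfolding N_def m_def by simp
    qed
  qed
  define \<Phi> where "\<Phi> = (\<lambda>(es, cc). (rY es n (fst (V (drop n es) cc)), rY es n (snd (V (drop n es) cc)), take n es))"
  have trip: "(\<lambda>\<omega>. (rha_block S C n j \<omega>, rha_block S C n (j + 1) \<omega>, rha_G S n \<omega>)) = (\<lambda>\<omega>. \<Phi> (T \<omega>))"
  proof (rule ext)
    fix \<omega>
    show "(rha_block S C n j \<omega>, rha_block S C n (j + 1) \<omega>, rha_G S n \<omega>) = \<Phi> (T \<omega>)"
      unfolding XV[of \<omega>] YV[of \<omega>] G \<Phi>_def T_def by simp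
  qed
  have tm: "(\<lambda>\<omega>. (rha_block S C n j \<omega>, rha_block S C n (j + 1) \<omega>, rha_G S n \<omega>)) \<in> measurable M (count_space UNIV)"
    unfolding trip by (rule measurable_compose[OF Tm]) simp
  have td: "distr M (count_space UNIV) (\<lambda>\<omega>. (rha_block S C n j \<omega>, rha_block S C n (j + 1) \<omega>, rha_G S n \<omega>))
      = measure_pmf (map_pmf (\<lambda>(g, (v, v')). (rY g n v, rY g n v', g)) (pair_pmf (Plist (map (Eq k) [1..<Suc n])) (pmf_of_set ({1..k n} \<times> {1..k n}))))"
    unfolding trip distr_comp_pmf[OF Tm TD] \<Phi>_def assembly[OF V] ..
  note I = info[OF P tm td k_pos finite_Pg rY_inj[OF _ order_refl]]
  show "prob_space.conditional_entropy M (exp 1) (count_space UNIV) (count_space UNIV)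
        (rha_block S C n j) (rha_G S n) = ln (real (k n))
    \<and> prob_space.conditional_mutual_information M (exp 1)
        (count_space UNIV) (count_space UNIV) (count_space UNIV)
        (rha_block S C n j) (rha_block S C n (j + 1)) (rha_G S n) = 0"
    using I by simp
qed

end
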